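(* Let $\Phi$ be a (Bourbaki) root system, $D$ a set of simple roots of $\Phi$, $J\subseteq D$, let $\pi_J\colon\mathbb Z\Phi\to\mathbb Z\Phi/\mathbb Z(D\setminus J)$ be the natural projection, and $\Phi_J=\pi_J(\Phi)\setminus\{0\}$. Then: (i) $\Phi_J$ is a regular root system in the sense of Ershov–Jaikin-Zapirain–Kassabov if and only if the rank of every irreducible component of $\Phi_J$ is $\ge 2$. (ii) For any $f\in F(\Phi_J)$ there exist a set of simple roots $D'$ of $\Phi$ and a subset $J'\subseteq D'$ with $\mathbb Z(D'\setminus J')\cap\Phi=\mathbb Z(D\setminus J)\cap\Phi$ and $(\Phi_J)_f=\pi_J(\Phi^{+'})\setminus\{0\}=\pi_{J'}(\Phi^{+'})\setminus\{0\}$, where $\Phi^{+'}$ is the set of positive roots with respect to $D'$. (iii) With $D',J'$ as in (ii), $(\Phi_J)_f\setminus C_f=\Phi_J\cap\bigcup_{\alpha\in\pi_J(J')}\mathbb N\alpha$.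
   Context: A root system in the sense of Ershov–Jaikin-Zapirain–Kassabov (EJZK) in a real vector space $E$ is a finite subset $\Phi$ spanning $E$, not containing $0$, closed under $\alpha\mapsto-\alpha$; its rank is $\dim E$. It is irreducible if it is not a disjoint union of two nonempty subsets whose $\mathbb R$-spans intersect trivially; it is regular if every root lies in an irreducible root subsystem of rank $2$. Here $\Phi_J$ is viewed in $E=\mathbb R\otimes\mathbb Z\Phi/\mathbb Z(D\setminus J)$. $F(\Phi_J)$ is the set of linear functionals $f\colon E\to\mathbb R$ with $f(\alpha)\neq0$ for all $\alpha\in\Phi_J$ and $f(\alpha)\ne f(\beta)$ for distinct $\alpha,\beta\in\Phi_J$; $(\Phi_J)_f=\{\alpha\in\Phi_J: f(\alpha)>0\}$ (a Borel subset). The core is $C_f=\{\alpha\in(\Phi_J)_f:\ \nexists g\in F(\Phi_J)\text{ with }\mathbb R\alpha=\mathbb R((\Phi_J)_f\cap(\Phi_J)_g)\}$. $\mathbb N\alpha$ denotes the positive integer multiples of $\alpha$. *)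

theory Defs
  imports "HOL-Analysis.Analysis"
begin

definition cartan :: "'a::euclidean_space \<Rightarrow> 'a \<Rightarrow> real" where
  "cartan \<beta> \<alpha> = 2 * (\<beta> \<bullet> \<alpha>) / (\<alpha> \<bullet> \<alpha>)"

definition root_refl :: "'a::euclidean_space \<Rightarrow> 'a \<Rightarrow> 'a" where
  "root_refl \<alpha> \<beta> = \<beta> - cartan \<beta> \<alpha> *\<^sub>R \<alpha>"

definition root_system :: "'a::euclidean_space set \<Rightarrow> bool" where
  "root_system \<Phi> \<longleftrightarrow> finite \<Phi> \<and> 0 \<notin> \<Phi> \<and> span \<Phi> = UNIV \<and>
     (\<forall>\<alpha>\<in>\<Phi>. \<forall>\<beta>\<in>\<Phi>. root_refl \<alpha> \<beta> \<in> \<Phi>) \<and>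
     (\<forall>\<alpha>\<in>\<Phi>. \<forall>\<beta>\<in>\<Phi>. cartan \<beta> \<alpha> \<in> \<int>)"

definition int_comb :: "'a::real_vector set \<Rightarrow> ('a \<Rightarrow> int) \<Rightarrow> 'a" where
  "int_comb D c = (\<Sum>d\<in>D. of_int (c d) *\<^sub>R d)"

definition simple_roots :: "'a::euclidean_space set \<Rightarrow> 'a set \<Rightarrow> bool" where
  "simple_roots \<Phi> D \<longleftrightarrow> D \<subseteq> \<Phi> \<and> independent D \<and>
     (\<forall>\<alpha>\<in>\<Phi>. \<exists>c. \<alpha> = int_comb D c \<and> ((\<forall>d\<in>D. c d \<ge> 0) \<or> (\<forall>d\<in>D. c d \<le> 0)))"

definition pos_roots :: "'a::euclidean_space set \<Rightarrow> 'a set \<Rightarrow> 'a set" where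
  "pos_roots \<Phi> D = {\<alpha>\<in>\<Phi>. \<exists>c. \<alpha> = int_comb D c \<and> (\<forall>d\<in>D. c d \<ge> 0)}"

definition int_span :: "'a::real_vector set \<Rightarrow> 'a set" where
  "int_span S = {x. \<exists>F c. finite F \<and> F \<subseteq> S \<and> x = int_comb F c}"

text \<open>We realise the quotient concretely: the natural projection modulo Z S is realised by the
orthogonal projection onto the orthogonal complement of the real span of S. When S = D - J for a
basis D of the root lattice, its kernel on Z Phi is exactly Z(D - J), so its image is canonically
isomorphic to Z Phi / Z(D - J), and the real span of the image is R (x) Z Phi / Z(D - J).\<close>
definition quot_proj :: "'a::euclidean_space set \<Rightarrow> 'a \<Rightarrow> 'a" where
  "quot_proj S v = (THE u. v - u \<in> span S \<and> (\<forall>w\<in>span S. u \<bullet> w = 0))"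

definition piJ :: "'a::euclidean_space set \<Rightarrow> 'a set \<Rightarrow> 'a \<Rightarrow> 'a" where
  "piJ D J = quot_proj (D - J)"

definition PhiJ :: "'a::euclidean_space set \<Rightarrow> 'a set \<Rightarrow> 'a set \<Rightarrow> 'a set" where
  "PhiJ \<Phi> D J = piJ D J ` \<Phi> - {0}"

text \<open>A finite set R of vectors is viewed as a root system in the space E = span R.\<close>
definition ejzk_root_system :: "'a::real_vector set \<Rightarrow> bool" where
  "ejzk_root_system R \<longleftrightarrow> finite R \<and> 0 \<notin> R \<and> (\<forall>\<alpha>\<in>R. - \<alpha> \<in> R)"

definition ejzk_rank :: "'a::euclidean_space set \<Rightarrow> nat" where
  "ejzk_rank R = dim (span R)"

definition ejzk_irreducible :: "'a::real_vector set \<Rightarrow> bool" where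
  "ejzk_irreducible R \<longleftrightarrow> \<not> (\<exists>A B. A \<noteq> {} \<and> B \<noteq> {} \<and> A \<inter> B = {} \<and> A \<union> B = R \<and>
       span A \<inter> span B = {0})"

definition ejzk_regular :: "'a::euclidean_space set \<Rightarrow> bool" where
  "ejzk_regular R \<longleftrightarrow> (\<forall>\<alpha>\<in>R. \<exists>S. S \<subseteq> R \<and> ejzk_root_system S \<and> \<alpha> \<in> S \<and>
       ejzk_irreducible S \<and> ejzk_rank S = 2)"

text \<open>Irreducible components: the nonempty irreducible pieces C of the (unique) decomposition
R = C_1 \<union> ... \<union> C_k with span R = direct sum of the span C_i; equivalently nonempty irreducible
subsets C with span C \<inter> span (R - C) = 0.\<close>
definition irr_component :: "'a::real_vector set \<Rightarrow> 'a set \<Rightarrow> bool" where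
  "irr_component R C \<longleftrightarrow> C \<noteq> {} \<and> C \<subseteq> R \<and> ejzk_irreducible C \<and> span C \<inter> span (R - C) = {0}"

text \<open>Linear functionals on E = span R are represented by linear functionals on the ambient
space (every functional on E extends; only the values on R matter).\<close>
definition Ffun :: "'a::real_vector set \<Rightarrow> ('a \<Rightarrow> real) set" where
  "Ffun R = {f. linear f \<and> (\<forall>\<alpha>\<in>R. f \<alpha> \<noteq> 0) \<and> inj_on f R}"

definition pos_part :: "'a::real_vector set \<Rightarrow> ('a \<Rightarrow> real) \<Rightarrow> 'a set" where
  "pos_part R f = {\<alpha>\<in>R. f \<alpha> > 0}"

definition core :: "'a::real_vector set \<Rightarrow> ('a \<Rightarrow> real) \<Rightarrow> 'a set" where
  "core R f = {\<alpha>\<in>pos_part R f. \<not> (\<exists>g\<in>Ffun R. span {\<alpha>} = span (pos_part R f \<inter> pos_part R g))}"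

definition nat_mults :: "'a::real_vector \<Rightarrow> 'a set" where
  "nat_mults \<alpha> = {of_nat k *\<^sub>R \<alpha> | k. k \<ge> 1}"

end

theory Submission
  imports Defs
begin


lemma qp_ex: fixes S :: "'a::euclidean_space set"
  shows "\<exists>u. v - u \<in> span S \<and> (\<forall>w\<in>span S. u \<bullet> w = 0)"
proof -
  obtain y z where "y \<in> span S" "\<And>w. w \<in> span S \<Longrightarrow> orthogonal z w" "v = y + z"
    using orthogonal_subspace_decomp_exists by blast
  then show ?thesis by (intro exI[of _ z]) (auto simp: orthogonal_def)
qed

lemma qp_uniq: fixes S :: "'a::euclidean_space set"
  assumes "v - u \<in> span S" "\<forall>w\<in>span S. u \<bullet> w = 0"
    "v - u' \<in> span S" "\<forall>w\<in>span S. u' \<bullet> w = 0"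
  shows "u = u'"
proof -
  have d: "u - u' \<in> span S" using span_diff[OF assms(3) assms(1)] by (simp add: algebra_simps)
  have "(u - u') \<bullet> (u - u') = 0"
    using assms(2,4) d by (simp add: inner_diff_left)
  then show ?thesis by simp
qed

lemma qp_char: fixes S :: "'a::euclidean_space set"
  shows "v - quot_proj S v \<in> span S \<and> (\<forall>w\<in>span S. quot_proj S v \<bullet> w = 0)"
  unfolding quot_proj_def
  by (rule theI') (use qp_ex qp_uniq in metis)

lemma qp_unique: fixes S :: "'a::euclidean_space set"
  assumes "v - u \<in> span S" "\<forall>w\<in>span S. u \<bullet> w = 0"
  shows "quot_proj S v = u"
  using qp_uniq[OF _ _ assms] qp_char by blast

lemma qp_linear: fixes S :: "'a::euclidean_space set"
  shows "linear (quot_proj S)"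
proof (rule linearI)
  fix x y
  show "quot_proj S (x + y) = quot_proj S x + quot_proj S y"
    apply (rule qp_unique)
    using span_add[OF conjunct1[OF qp_char[of x S]] conjunct1[OF qp_char[of y S]]]
     apply (simp add: algebra_simps)
    using qp_char[of x S] qp_char[of y S] by (simp add: inner_add_left)
next
  fix c :: real and x
  show "quot_proj S (c *\<^sub>R x) = c *\<^sub>R quot_proj S x"
    apply (rule qp_unique)
    using span_scale[OF conjunct1[OF qp_char[of x S]], of c]
     apply (simp add: algebra_simps)
    using qp_char[of x S] by simp
qed

lemma qp_zero_iff: fixes S :: "'a::euclidean_space set"
  shows "quot_proj S v = 0 \<longleftrightarrow> v \<in> span S"
proof
  assume "quot_proj S v = 0" then show "v \<in> span S" using qp_char[of v S] by simp
next
  assume "v \<in> span S" then show "quot_proj S v = 0" by (intro qp_unique) auto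
qed

lemma qp_eq: fixes S :: "'a::euclidean_space set"
  assumes "v - v' \<in> span S" shows "quot_proj S v = quot_proj S v'"
proof -
  have "quot_proj S (v - v') = 0" using assms qp_zero_iff by blast
  then show ?thesis using linear_diff[OF qp_linear] by (metis eq_iff_diff_eq_0)
qed

lemma qp_cong: "span S = span T \<Longrightarrow> quot_proj S = quot_proj T"
  unfolding quot_proj_def by (rule ext) simp



lemma small_pert:
  fixes a b :: "'b \<Rightarrow> real"
  assumes "finite U" "\<forall>u\<in>U. a u \<noteq> 0"
  shows "\<exists>t>0. \<forall>u\<in>U. \<bar>t * b u\<bar> < \<bar>a u\<bar>"
proof (cases "U = {}")
  case True then show ?thesis by (intro exI[of _ 1]) auto
next
  case False
  define t where "t = Min ((\<lambda>u. \<bar>a u\<bar> / (\<bar>b u\<bar> + 1)) ` U)"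
  have t0: "t > 0" unfolding t_def using assms False by (subst Min_gr_iff) auto
  have "\<bar>t * b u\<bar> < \<bar>a u\<bar>" if u: "u \<in> U" for u
  proof -
    have "t \<le> \<bar>a u\<bar> / (\<bar>b u\<bar> + 1)" unfolding t_def using u assms by (intro Min_le) auto
    then have "t * (\<bar>b u\<bar> + 1) \<le> \<bar>a u\<bar>" by (simp add: pos_le_divide_eq add_pos_nonneg)
    then have "t * \<bar>b u\<bar> < \<bar>a u\<bar>" using t0 by (simp add: algebra_simps)
    then show ?thesis using t0 by (simp add: abs_mult)
  qed
  then show ?thesis using t0 by blast
qed

lemma lin_comb:
  fixes a b :: "'a::real_vector \<Rightarrow> real"
  assumes "linear a" "linear b"
  shows "linear (\<lambda>v. a v + t * b v)"
proof (rule linearI)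
  fix x y show "a (x + y) + t * b (x + y) = a x + t * b x + (a y + t * b y)"
    using linear_add[OF assms(1)] linear_add[OF assms(2)] by (simp add: algebra_simps)
next
  fix c :: real and x show "a (c *\<^sub>R x) + t * b (c *\<^sub>R x) = c *\<^sub>R (a x + t * b x)"
    using linear_scale[OF assms(1)] linear_scale[OF assms(2)] by (simp add: algebra_simps)
qed

lemma lin_inner: "linear (\<lambda>v. (x::'a::real_inner) \<bullet> v)"
  by (rule linearI) (auto simp: inner_add_right)

lemma nonzero_functional:
  fixes U :: "'a::euclidean_space set"
  assumes "finite U" "0 \<notin> U"
  shows "\<exists>k. linear k \<and> (\<forall>u\<in>U. k u \<noteq> (0::real))"
  using assms
proof (induction U rule: finite_induct)
  case empty then show ?case by (intro exI[of _ "\<lambda>_. 0"]) (simp add: linear_zero)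
next
  case (insert x F)
  have "\<exists>k. linear k \<and> (\<forall>u\<in>F. k u \<noteq> (0::real))" using insert by simp
  then obtain k where k: "linear k" "\<forall>u\<in>F. k u \<noteq> (0::real)" by blast
  show ?case
  proof (cases "k x = 0")
    case False then show ?thesis using k by auto
  next
    case True
    obtain t where t: "t > 0" "\<forall>u\<in>F. \<bar>t * (x \<bullet> u)\<bar> < \<bar>k u\<bar>"
      using small_pert[OF insert(1) k(2), of "\<lambda>u. x \<bullet> u"] by blast
    define k' where "k' = (\<lambda>v. k v + t * (x \<bullet> v))"
    have "linear k'" unfolding k'_def by (intro lin_comb k(1) lin_inner)
    moreover have "k' x \<noteq> 0" unfolding k'_def using True t insert by simp
    moreover have "k' u \<noteq> 0" if "u \<in> F" for u
    proof
      assume "k' u = 0"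
      then have "t * (x \<bullet> u) = - k u" unfolding k'_def by linarith
      then show False using t(2) that by fastforce
    qed
    ultimately show ?thesis by auto
  qed
qed

lemma generic_pert:
  fixes U :: "'a::euclidean_space set" and g0 :: "'a \<Rightarrow> real"
  assumes "finite U" "0 \<notin> U" "linear g0"
  shows "\<exists>g. linear g \<and> (\<forall>u\<in>U. g u \<noteq> (0::real)) \<and> (\<forall>u\<in>U. g0 u > 0 \<longrightarrow> g u > 0)
     \<and> (\<forall>u\<in>U. g0 u < 0 \<longrightarrow> g u < 0)"
proof -
  obtain k where k: "linear k" "\<forall>u\<in>U. k u \<noteq> (0::real)" using nonzero_functional[OF assms(1,2)] by blast
  let ?V = "{u\<in>U. g0 u \<noteq> 0}"
  obtain t where t: "t > 0" "\<forall>u\<in>?V. \<bar>t * k u\<bar> < \<bar>g0 u\<bar>"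
  proof -
    have "finite ?V" using assms(1) by simp
    from small_pert[OF this, of g0 k] show ?thesis using that by auto
  qed
  define g where "g = (\<lambda>v. g0 v + t * k v)"
  have "linear g" unfolding g_def using assms(3) k(1) by (rule lin_comb)
  moreover have "\<forall>u\<in>U. g u \<noteq> 0"
  proof
    fix u assume u: "u \<in> U"
    show "g u \<noteq> 0"
    proof (cases "g0 u = 0")
      case True then show ?thesis using k t u by (simp add: g_def)
    next
      case False then have "\<bar>t * k u\<bar> < \<bar>g0 u\<bar>" using t u by auto
      then show ?thesis unfolding g_def by linarith
    qed
  qed
  moreover have "\<forall>u\<in>U. g0 u > 0 \<longrightarrow> g u > 0" "\<forall>u\<in>U. g0 u < 0 \<longrightarrow> g u < 0"
  proof (safe)
    fix u assume u: "u \<in> U" "g0 u > 0"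
    then have "\<bar>t * k u\<bar> < \<bar>g0 u\<bar>" using t by auto
    then show "g u > 0" using u unfolding g_def by linarith
  next
    fix u assume u: "u \<in> U" "g0 u < 0"
    then have "\<bar>t * k u\<bar> < \<bar>g0 u\<bar>" using t by auto
    then show "g u < 0" using u unfolding g_def by linarith
  qed
  ultimately show ?thesis by blast
qed



lemma rs_finite: "root_system \<Phi> \<Longrightarrow> finite \<Phi>" and rs_0: "root_system \<Phi> \<Longrightarrow> 0 \<notin> \<Phi>"
  and rs_refl: "root_system \<Phi> \<Longrightarrow> \<alpha> \<in> \<Phi> \<Longrightarrow> \<beta> \<in> \<Phi> \<Longrightarrow> root_refl \<alpha> \<beta> \<in> \<Phi>"
  and rs_int: "root_system \<Phi> \<Longrightarrow> \<alpha> \<in> \<Phi> \<Longrightarrow> \<beta> \<in> \<Phi> \<Longrightarrow> cartan \<beta> \<alpha> \<in> \<int>"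
  and rs_span: "root_system \<Phi> \<Longrightarrow> span \<Phi> = UNIV"
  unfolding root_system_def by auto

lemma rs_neg: assumes "root_system \<Phi>" "\<alpha> \<in> \<Phi>" shows "- \<alpha> \<in> \<Phi>"
proof -
  have "\<alpha> \<noteq> 0" using assms rs_0 by blast
  then have "root_refl \<alpha> \<alpha> = - \<alpha>" by (simp add: root_refl_def cartan_def scaleR_2 algebra_simps)
  then show ?thesis using rs_refl[OF assms(1,2,2)] by simp
qed

lemma strict_cs:
  fixes \<alpha> \<beta> :: "'a::euclidean_space"
  assumes "\<alpha> \<noteq> 0" "\<beta> \<notin> span {\<alpha>}"
  shows "(\<alpha> \<bullet> \<beta>)^2 < (\<alpha> \<bullet> \<alpha>) * (\<beta> \<bullet> \<beta>)"
proof -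
  have ne: "\<bar>\<alpha> \<bullet> \<beta>\<bar> \<noteq> norm \<alpha> * norm \<beta>"
  proof
    assume "\<bar>\<alpha> \<bullet> \<beta>\<bar> = norm \<alpha> * norm \<beta>"
    then have "norm \<alpha> *\<^sub>R \<beta> = norm \<beta> *\<^sub>R \<alpha> \<or> norm \<alpha> *\<^sub>R \<beta> = - norm \<beta> *\<^sub>R \<alpha>"
      using norm_cauchy_schwarz_abs_eq by blast
    moreover have "\<beta> = (1 / norm \<alpha>) *\<^sub>R (norm \<alpha> *\<^sub>R \<beta>)" using assms(1) by simp
    moreover have "\<alpha> \<in> span {\<alpha>}" by (simp add: span_base)
    ultimately have "\<beta> \<in> span {\<alpha>}"
      by (metis span_scale span_neg)
    then show False using assms by blast
  qed
  have "\<bar>\<alpha> \<bullet> \<beta>\<bar> < norm \<alpha> * norm \<beta>" using ne Cauchy_Schwarz_ineq2[of \<alpha> \<beta>] by linarith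
  then have "\<bar>\<alpha> \<bullet> \<beta>\<bar>^2 < (norm \<alpha> * norm \<beta>)^2"
    by (intro power_strict_mono) auto
  then show ?thesis by (simp add: power_mult_distrib power2_norm_eq_inner)
qed

lemma int_pos_prod_lt4:
  fixes a b :: real
  assumes "a \<in> \<int>" "b \<in> \<int>" "a > 0" "b > 0" "a * b < 4"
  shows "a = 1 \<or> b = 1"
proof -
  obtain m where m: "a = of_int m" using assms(1) Ints_cases by blast
  obtain n where n: "b = of_int n" using assms(2) Ints_cases by blast
  have "m \<ge> 1" "n \<ge> 1" using assms m n by auto
  have "m * n < 4" using assms(5) m n by (metis of_int_less_iff of_int_mult of_int_numeral)
  have "m = 1 \<or> n = 1"
  proof (rule ccontr)
    assume "\<not> (m = 1 \<or> n = 1)"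
    then have "m \<ge> 2" "n \<ge> 2" using \<open>m \<ge> 1\<close> \<open>n \<ge> 1\<close> by auto
    then have "m * n \<ge> 2 * 2" by (intro mult_mono) auto
    then show False using \<open>m * n < 4\<close> by simp
  qed
  then show ?thesis using m n by auto
qed

lemma root_diff:
  assumes rs: "root_system \<Phi>" and a: "\<alpha> \<in> \<Phi>" and b: "\<beta> \<in> \<Phi>"
    and np: "\<beta> \<notin> span {\<alpha>}" and pos: "\<alpha> \<bullet> \<beta> > 0"
  shows "\<alpha> - \<beta> \<in> \<Phi>"
proof -
  have a0: "\<alpha> \<noteq> 0" and b0: "\<beta> \<noteq> 0" using rs a b rs_0 by blast+
  have aa: "\<alpha> \<bullet> \<alpha> > 0" and bb: "\<beta> \<bullet> \<beta> > 0" using a0 b0 by auto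
  define x where "x = cartan \<alpha> \<beta>"
  define y where "y = cartan \<beta> \<alpha>"
  have xi: "x \<in> \<int>" "y \<in> \<int>" unfolding x_def y_def using rs_int[OF rs] a b by auto
  have xp: "x > 0" "y > 0" unfolding x_def y_def cartan_def using aa bb pos
    by (auto simp: inner_commute)
  have "x * y = 4 * (\<alpha> \<bullet> \<beta>)^2 / ((\<alpha> \<bullet> \<alpha>) * (\<beta> \<bullet> \<beta>))"
    unfolding x_def y_def cartan_def by (simp add: inner_commute power2_eq_square)
  also have "\<dots> < 4" using strict_cs[OF a0 np] aa bb by (simp add: divide_less_eq)
  finally have "x = 1 \<or> y = 1" using int_pos_prod_lt4 xi xp by blast
  then show ?thesis
  proof
    assume "x = 1"
    then have "root_refl \<beta> \<alpha> = \<alpha> - \<beta>" by (simp add: root_refl_def x_def)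
    then show ?thesis using rs_refl[OF rs b a] by simp
  next
    assume "y = 1"
    then have "root_refl \<alpha> \<beta> = \<beta> - \<alpha>" by (simp add: root_refl_def y_def)
    then have "\<beta> - \<alpha> \<in> \<Phi>" using rs_refl[OF rs a b] by simp
    from rs_neg[OF rs this] show ?thesis by simp
  qed
qed

lemma root_sum:
  assumes rs: "root_system \<Phi>" and a: "\<alpha> \<in> \<Phi>" and b: "\<beta> \<in> \<Phi>"
    and np: "\<beta> \<notin> span {\<alpha>}" and neg: "\<alpha> \<bullet> \<beta> < 0"
  shows "\<alpha> + \<beta> \<in> \<Phi>"
proof -
  have "- \<beta> \<notin> span {\<alpha>}" using np span_neg by fastforce
  from root_diff[OF rs a rs_neg[OF rs b] this] neg show ?thesis by simp
qed

lemma root_prop: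
  assumes rs: "root_system \<Phi>" and a: "\<alpha> \<in> \<Phi>" and b: "c *\<^sub>R \<alpha> \<in> \<Phi>" and c: "c > 0" "c \<noteq> 1"
  shows "c = 2 \<or> c = 1/2"
proof -
  have a0: "\<alpha> \<noteq> 0" using rs a rs_0 by blast
  have "cartan (c *\<^sub>R \<alpha>) \<alpha> = 2 * c" using a0 by (simp add: cartan_def)
  moreover have "cartan \<alpha> (c *\<^sub>R \<alpha>) = 2 / c" using a0 c by (simp add: cartan_def)
  ultimately have i: "2 * c \<in> \<int>" "2 / c \<in> \<int>" using rs_int[OF rs] a b by metis+
  obtain m where m: "2 * c = of_int m" using i(1) Ints_cases by blast
  obtain n where n: "2 / c = of_int n" using i(2) Ints_cases by blast
  have "of_int m * of_int n = (4::real)" using m n c by (metis mult.commute nonzero_divide_eq_eq times_divide_eq_right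
        divide_self_if mult_2 numeral_Bit0 less_irrefl)
  then have mn: "m * n = 4" by (metis of_int_eq_iff of_int_mult of_int_numeral)
  have m0: "m > 0" using m c by (metis of_int_0_less_iff zero_less_mult_iff zero_less_numeral)
  have "m \<le> 4" using mn m0 by (metis dvd_imp_le_int dvd_triv_left abs_of_pos zero_neq_numeral abs_numeral)
  then have "m = 1 \<or> m = 2 \<or> m = 3 \<or> m = 4" using m0 by auto
  moreover have "m \<noteq> 3"
  proof
    assume "m = 3" then have "3 * n = 4" using mn by simp
    then show False by presburger
  qed
  moreover have "m \<noteq> 2" using m c by auto
  ultimately have "m = 1 \<or> m = 4" by blast
  then show ?thesis using m by auto
qed



lemma int_comb_add: "int_comb D (\<lambda>d. c1 d + c2 d) = int_comb D c1 + int_comb D c2"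
  unfolding int_comb_def by (simp add: scaleR_add_left sum.distrib)

lemma int_comb_neg: "int_comb D (\<lambda>d. - c d) = - int_comb D c"
  unfolding int_comb_def by (simp add: sum_negf)

lemma int_comb_delta: "finite D \<Longrightarrow> x \<in> D \<Longrightarrow> int_comb D (\<lambda>d. if d = x then 1 else 0) = x"
proof -
  assume "finite D" "x \<in> D"
  have "int_comb D (\<lambda>d. if d = x then 1 else 0) = (\<Sum>d\<in>D. if d = x then d else 0)"
    unfolding int_comb_def by (rule sum.cong) auto
  also have "\<dots> = x" using \<open>finite D\<close> \<open>x \<in> D\<close> by (simp add: sum.delta)
  finally show ?thesis .
qed

lemma lin_int_comb: "linear f \<Longrightarrow> f (int_comb D c) = (\<Sum>d\<in>D. of_int (c d) *\<^sub>R f d)"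
  unfolding int_comb_def by (simp add: linear_sum linear_scale)

locale genfun =
  fixes \<Phi> :: "'a::euclidean_space set" and h :: "'a \<Rightarrow> real"
  assumes rs: "root_system \<Phi>" and lh: "linear h" and hnz: "\<And>\<gamma>. \<gamma> \<in> \<Phi> \<Longrightarrow> h \<gamma> \<noteq> 0"
begin

definition "Pos = {\<gamma>\<in>\<Phi>. h \<gamma> > 0}"
definition "Dh = {\<gamma>\<in>Pos. \<not> (\<exists>a\<in>Pos. \<exists>b\<in>Pos. \<gamma> = a + b)}"

lemma finPos: "finite Pos" unfolding Pos_def using rs_finite[OF rs] by simp
lemma finDh: "finite Dh" unfolding Dh_def using finPos by simp
lemma Dh_Pos: "Dh \<subseteq> Pos" unfolding Dh_def by auto
lemma Pos_Phi: "Pos \<subseteq> \<Phi>" unfolding Pos_def by auto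

lemma hsum: "h (a + b) = h a + h b" using linear_add[OF lh] .
lemma hdiff: "h (a - b) = h a - h b" using linear_diff[OF lh] .
lemma hscale: "h (c *\<^sub>R a) = c * h a" using linear_scale[OF lh] by simp

lemma pos_comb_aux:
  "\<forall>\<gamma>\<in>Pos. card {\<rho>\<in>Pos. h \<rho> < h \<gamma>} = n \<longrightarrow> (\<exists>c. \<gamma> = int_comb Dh c \<and> (\<forall>d\<in>Dh. c d \<ge> 0))"
proof (induction n rule: less_induct)
  case (less n)
  show ?case
  proof (intro ballI impI)
    fix \<gamma> assume g: "\<gamma> \<in> Pos" and n: "card {\<rho>\<in>Pos. h \<rho> < h \<gamma>} = n"
    show "\<exists>c. \<gamma> = int_comb Dh c \<and> (\<forall>d\<in>Dh. c d \<ge> 0)"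
    proof (cases "\<gamma> \<in> Dh")
      case True then show ?thesis
        by (intro exI[of _ "\<lambda>d. if d = \<gamma> then 1 else 0"]) (simp add: int_comb_delta finDh)
    next
      case False
      then obtain a b where ab: "a \<in> Pos" "b \<in> Pos" "\<gamma> = a + b" using g unfolding Dh_def by auto
      have ha: "h a > 0" "h b > 0" using ab unfolding Pos_def by auto
      have IH: "\<exists>c. x = int_comb Dh c \<and> (\<forall>d\<in>Dh. c d \<ge> 0)" if x: "x \<in> Pos" "h x < h \<gamma>" for x
      proof -
        have sub: "{\<rho>\<in>Pos. h \<rho> < h x} \<subset> {\<rho>\<in>Pos. h \<rho> < h \<gamma>}" using x by auto
        have "card {\<rho>\<in>Pos. h \<rho> < h x} < n" using psubset_card_mono[OF _ sub] finPos n by simp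
        then show ?thesis using less x by blast
      qed
      obtain ca where ca: "a = int_comb Dh ca" "\<forall>d\<in>Dh. ca d \<ge> 0"
        using IH[of a] ab ha hsum by auto
      obtain cb where cb: "b = int_comb Dh cb" "\<forall>d\<in>Dh. cb d \<ge> 0"
        using IH[of b] ab ha hsum by auto
      show ?thesis using ca cb ab
        by (intro exI[of _ "\<lambda>d. ca d + cb d"]) (simp add: int_comb_add)
    qed
  qed
qed

lemma pos_comb: "\<gamma> \<in> Pos \<Longrightarrow> \<exists>c. \<gamma> = int_comb Dh c \<and> (\<forall>d\<in>Dh. c d \<ge> 0)"
  using pos_comb_aux by blast

lemma Dh_obtuse:
  assumes a: "\<alpha> \<in> Dh" and b: "\<beta> \<in> Dh" and ne: "\<alpha> \<noteq> \<beta>"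
  shows "\<alpha> \<bullet> \<beta> \<le> 0"
proof (rule ccontr)
  assume "\<not> \<alpha> \<bullet> \<beta> \<le> 0"
  then have pos: "\<alpha> \<bullet> \<beta> > 0" by simp
  have aP: "\<alpha> \<in> Pos" "\<beta> \<in> Pos" using a b Dh_Pos by auto
  have aPhi: "\<alpha> \<in> \<Phi>" "\<beta> \<in> \<Phi>" using aP Pos_Phi by auto
  have ha: "h \<alpha> > 0" "h \<beta> > 0" using aP unfolding Pos_def by auto
  show False
  proof (cases "\<beta> \<in> span {\<alpha>}")
    case True
    then obtain c where c: "\<beta> = c *\<^sub>R \<alpha>" by (auto simp: span_singleton)
    have "c > 0" using ha c hscale by (metis zero_less_mult_pos2)
    moreover have "c \<noteq> 1" using c ne by auto
    ultimately have "c = 2 \<or> c = 1/2" using root_prop[OF rs aPhi(1)] c aPhi(2) by blast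
    then show False
    proof
      assume "c = 2" then have "\<beta> = \<alpha> + \<alpha>" using c by (simp add: scaleR_2)
      then show False using b aP unfolding Dh_def by blast
    next
      assume "c = 1/2"
      have "\<beta> + \<beta> = (c + c) *\<^sub>R \<alpha>" using c by (metis scaleR_add_left)
      then have "\<alpha> = \<beta> + \<beta>" using \<open>c = 1/2\<close> by simp
      then show False using a aP unfolding Dh_def by blast
    qed
  next
    case False
    have d: "\<alpha> - \<beta> \<in> \<Phi>" using root_diff[OF rs aPhi False pos] .
    show False
    proof (cases "h (\<alpha> - \<beta>) > 0")
      case True
      then have "\<alpha> - \<beta> \<in> Pos" using d unfolding Pos_def by auto
      moreover have "\<alpha> = (\<alpha> - \<beta>) + \<beta>" by simp
      ultimately show False using a aP unfolding Dh_def by blast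
    next
      case False
      then have "h (\<beta> - \<alpha>) > 0" using hnz[OF d] hdiff by (smt (verit))
      moreover have "\<beta> - \<alpha> \<in> \<Phi>" using rs_neg[OF rs d] by simp
      ultimately have "\<beta> - \<alpha> \<in> Pos" unfolding Pos_def by auto
      moreover have "\<beta> = (\<beta> - \<alpha>) + \<alpha>" by simp
      ultimately show False using b aP unfolding Dh_def by blast
    qed
  qed
qed

lemma Dh_indep: "independent Dh"
  unfolding independent_explicit
proof (intro conjI allI impI ballI finDh)
  fix c v assume sum0: "(\<Sum>v\<in>Dh. c v *\<^sub>R v) = 0" and v: "v \<in> Dh"
  define P where "P = {v\<in>Dh. c v > 0}"
  define N where "N = {v\<in>Dh. c v < 0}"
  have fin: "finite P" "finite N" unfolding P_def N_def by (rule finite_subset[OF _ finDh], blast)+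
  have split: "(\<Sum>v\<in>Dh. c v *\<^sub>R v) = (\<Sum>v\<in>P. c v *\<^sub>R v) + (\<Sum>v\<in>N. c v *\<^sub>R v)"
  proof -
    have "(\<Sum>v\<in>Dh. c v *\<^sub>R v) = (\<Sum>v\<in>P \<union> N. c v *\<^sub>R v)"
      by (rule sum.mono_neutral_right) (use fin finDh in \<open>auto simp: P_def N_def\<close>)
    also have "\<dots> = (\<Sum>v\<in>P. c v *\<^sub>R v) + (\<Sum>v\<in>N. c v *\<^sub>R v)"
      by (rule sum.union_disjoint[OF fin]) (auto simp: P_def N_def)
    finally show ?thesis .
  qed
  define s where "s = (\<Sum>v\<in>P. c v *\<^sub>R v)"
  have sN: "s = (\<Sum>v\<in>N. (- c v) *\<^sub>R v)" using sum0 split unfolding s_def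
    by (simp add: sum_negf eq_neg_iff_add_eq_0)
  have "s \<bullet> s = (\<Sum>v\<in>P. c v *\<^sub>R v) \<bullet> (\<Sum>v\<in>N. (- c v) *\<^sub>R v)"
    using s_def sN by metis
  also have "\<dots> = (\<Sum>p\<in>P. \<Sum>q\<in>N. (c p * (- c q)) * (p \<bullet> q))"
    apply (simp add: inner_sum_left inner_sum_right sum_distrib_left algebra_simps)
    apply (subst sum.swap) apply (simp add: ac_simps inner_commute sum_negf)
    done
  also have "\<dots> \<le> 0"
  proof (intro sum_nonpos)
    fix p q assume p: "p \<in> P" and q: "q \<in> N"
    have "p \<noteq> q" using p q unfolding P_def N_def by auto
    then have "p \<bullet> q \<le> 0" using Dh_obtuse p q unfolding P_def N_def by auto
    moreover have "c p * (- c q) \<ge> 0" using p q unfolding P_def N_def by (auto intro: mult_pos_neg[THEN less_imp_le] simp del: mult_minus_right)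
    ultimately show "c p * - c q * (p \<bullet> q) \<le> 0" using mult_nonneg_nonpos by blast
  qed
  finally have s0: "s = 0" by (metis inner_gt_zero_iff not_le)
  have hpos: "h d > 0" if "d \<in> Dh" for d using that Dh_Pos unfolding Pos_def by auto
  have P0: "P = {}"
  proof (rule ccontr)
    assume "P \<noteq> {}"
    have "h s = (\<Sum>v\<in>P. c v * h v)" unfolding s_def by (simp add: linear_sum[OF lh] hscale)
    also have "\<dots> > 0" using \<open>P \<noteq> {}\<close> fin hpos unfolding P_def by (intro sum_pos) auto
    finally show False using s0 linear_0[OF lh] by simp
  qed
  have N0: "N = {}"
  proof (rule ccontr)
    assume "N \<noteq> {}"
    have "h s = (\<Sum>v\<in>N. (- c v) * h v)" unfolding sN by (simp add: linear_sum[OF lh] hscale del: scaleR_minus_left)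
    also have "\<dots> > 0" using \<open>N \<noteq> {}\<close> fin hpos unfolding N_def
      by (intro sum_pos) (auto simp: mult_neg_pos)
    finally show False using s0 linear_0[OF lh] by simp
  qed
  have "\<not> c v > 0" "\<not> c v < 0" using P0 N0 v unfolding P_def N_def by auto
  then show "c v = 0" by linarith
qed

lemma pos_roots_eq: "pos_roots \<Phi> Dh = Pos"
proof
  show "Pos \<subseteq> pos_roots \<Phi> Dh" using pos_comb Pos_Phi unfolding pos_roots_def by auto
next
  show "pos_roots \<Phi> Dh \<subseteq> Pos"
  proof
    fix \<gamma> assume "\<gamma> \<in> pos_roots \<Phi> Dh"
    then obtain c where g: "\<gamma> \<in> \<Phi>" "\<gamma> = int_comb Dh c" "\<forall>d\<in>Dh. c d \<ge> 0"
      unfolding pos_roots_def by auto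
    have "h \<gamma> = (\<Sum>d\<in>Dh. of_int (c d) * h d)" using g lin_int_comb[OF lh] by simp
    also have "\<dots> \<ge> 0" using g(3) Dh_Pos unfolding Pos_def by (intro sum_nonneg) auto
    finally show "\<gamma> \<in> Pos" using hnz[OF g(1)] g(1) unfolding Pos_def by auto
  qed
qed

lemma simple_Dh: "simple_roots \<Phi> Dh"
  unfolding simple_roots_def
proof (intro conjI ballI Dh_indep)
  show "Dh \<subseteq> \<Phi>" using Dh_Pos Pos_Phi by auto
next
  fix \<alpha> assume a: "\<alpha> \<in> \<Phi>"
  show "\<exists>c. \<alpha> = int_comb Dh c \<and> ((\<forall>d\<in>Dh. 0 \<le> c d) \<or> (\<forall>d\<in>Dh. c d \<le> 0))"
  proof (cases "h \<alpha> > 0")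
    case True then show ?thesis using pos_comb a unfolding Pos_def by blast
  next
    case False
    then have "h (- \<alpha>) > 0" using hnz[OF a] linear_neg[OF lh] by (smt (verit))
    then have "- \<alpha> \<in> Pos" using rs_neg[OF rs a] unfolding Pos_def by auto
    then obtain c where c: "- \<alpha> = int_comb Dh c" "\<forall>d\<in>Dh. c d \<ge> 0" using pos_comb by blast
    then have "\<alpha> = int_comb Dh (\<lambda>d. - c d)" by (metis int_comb_neg minus_minus)
    then show ?thesis using c by (intro exI[of _ "\<lambda>d. - c d"]) auto
  qed
qed

end



lemma lin_qp: "linear (quot_proj S)" by (rule qp_linear)

lemma dim1_prop:
  fixes T :: "'a::euclidean_space set"
  assumes "dim (span T) \<le> 1" "a \<in> T" "a \<noteq> 0" "b \<in> T"
  shows "b \<in> span {a}"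
proof (rule ccontr)
  assume nb: "b \<notin> span {a}"
  then have "b \<noteq> a" using span_base[of a "{a}"] by auto
  have ind: "independent {b, a}" using nb assms(3)
    by (intro independent_insertI) (auto simp: independent_insert dependent_single independent_empty)
  have "card {b, a} \<le> dim (span T)" using assms(2,4)
    by (intro independent_card_le_dim ind) (auto intro: span_base)
  then show False using \<open>b \<noteq> a\<close> assms(1) by simp
qed

lemma irr_plane:
  fixes S :: "'a::euclidean_space set"
  assumes d2: "dim (span S) = 2" and S0: "0 \<notin> S" and uvw: "u \<in> S" "v \<in> S" "w \<in> S"
    and np: "v \<notin> span {u}" "w \<notin> span {u}" "w \<notin> span {v}"
  shows "ejzk_irreducible S"
  unfolding ejzk_irreducible_def
proof
  assume "\<exists>A B. A \<noteq> {} \<and> B \<noteq> {} \<and> A \<inter> B = {} \<and> A \<union> B = S \<and> span A \<inter> span B = {0}"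
  then obtain A B where AB: "A \<noteq> {}" "B \<noteq> {}" "A \<inter> B = {}" "A \<union> B = S" "span A \<inter> span B = {0}"
    by blast
  have "dim {x + y |x y. x \<in> span A \<and> y \<in> span B} + dim (span A \<inter> span B) = dim (span A) + dim (span B)"
    by (rule dim_sums_Int) auto
  moreover have "{x + y |x y. x \<in> span A \<and> y \<in> span B} = span S" using span_Un[of A B] AB(4) by simp
  ultimately have sum: "dim (span A) + dim (span B) = 2" using AB(5) d2 by simp
  have nz: "dim (span T) \<noteq> 0" if T: "T \<noteq> {}" "T \<subseteq> S" for T
  proof -
    obtain a where a: "a \<in> T" using T by blast
    then have "a \<noteq> 0" "a \<in> span T" using T S0 span_base by auto
    then show ?thesis using dim_eq_0[of "span T"] by blast
  qed
  have a1: "dim (span A) \<noteq> 0" using nz AB by blast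
  have b1: "dim (span B) \<noteq> 0" using nz AB by blast
  have dA: "dim (span A) \<le> 1" using sum a1 b1 by linarith
  have dB: "dim (span B) \<le> 1" using sum a1 b1 by linarith
  have u0: "u \<noteq> 0" "v \<noteq> 0" using uvw S0 by auto
  have nuv: False if "dim (span T) \<le> 1" "u \<in> T" "v \<in> T" for T
    using dim1_prop[OF that(1,2) u0(1) that(3)] np(1) by blast
  have nuw: False if "dim (span T) \<le> 1" "u \<in> T" "w \<in> T" for T
    using dim1_prop[OF that(1,2) u0(1) that(3)] np(2) by blast
  have nvw: False if "dim (span T) \<le> 1" "v \<in> T" "w \<in> T" for T
    using dim1_prop[OF that(1,2) u0(2) that(3)] np(3) by blast
  have "u \<in> A \<or> u \<in> B" "v \<in> A \<or> v \<in> B" "w \<in> A \<or> w \<in> B" using uvw AB(4) by auto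
  then show False using nuv[OF dA] nuv[OF dB] nuw[OF dA] nuw[OF dB] nvw[OF dA] nvw[OF dB] by blast
qed



lemma orth_span:
  fixes P Q :: "'a::euclidean_space set"
  assumes "\<forall>p\<in>P. \<forall>q\<in>Q. p \<bullet> q = 0" "u \<in> span P" "v \<in> span Q"
  shows "u \<bullet> v = 0"
proof -
  have "orthogonal p v" if "p \<in> P" for p
    using orthogonal_to_span[OF assms(3)] assms(1) that by (auto simp: orthogonal_def)
  then have "orthogonal v u"
    using orthogonal_to_span[OF assms(2), of v] by (auto simp: orthogonal_def inner_commute)
  then show ?thesis by (simp add: orthogonal_def inner_commute)
qed

lemma in_span1: "v \<in> span {a} \<longleftrightarrow> (\<exists>k. v = k *\<^sub>R a)"
  by (auto simp: span_singleton)

locale projsys =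
  fixes \<Phi> K0 :: "'a::euclidean_space set"
  assumes rs: "root_system \<Phi>" and K0: "K0 \<subseteq> \<Phi>"
begin

abbreviation "pr \<equiv> quot_proj K0"
definition "R = pr ` \<Phi> - {0}"

lemma pr_add: "pr (a + b) = pr a + pr b" using linear_add[OF qp_linear] .
lemma pr_neg: "pr (- a) = - pr a" using linear_neg[OF qp_linear] .
lemma pr_scale: "pr (c *\<^sub>R a) = c *\<^sub>R pr a" using linear_scale[OF qp_linear] .
lemma pr_diff: "pr (a - b) = pr a - pr b" using linear_diff[OF qp_linear] .

lemma R_sym: "y \<in> R \<Longrightarrow> - y \<in> R"
  unfolding R_def using rs_neg[OF rs] pr_neg by (auto simp: image_iff) (metis pr_neg)

lemma R_ejzk: "ejzk_root_system R"
  unfolding ejzk_root_system_def using R_sym rs_finite[OF rs] by (auto simp: R_def)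

lemma pr_refl: "\<kappa> \<in> span K0 \<Longrightarrow> pr (v - c *\<^sub>R \<kappa>) = pr v"
  using qp_zero_iff[of K0 "c *\<^sub>R \<kappa>"] span_scale[of \<kappa> K0 c] pr_diff by simp

lemma good_pair:
  assumes x: "x \<in> R" and g: "\<gamma> \<in> \<Phi>" "pr \<gamma> \<noteq> 0" "pr \<gamma> \<in> span {x}"
    and d: "\<delta> \<in> \<Phi>" "pr \<delta> \<notin> span {x}" and gd: "\<gamma> \<bullet> \<delta> \<noteq> 0"
  shows "\<exists>S. S \<subseteq> R \<and> ejzk_root_system S \<and> x \<in> S \<and> ejzk_irreducible S \<and> ejzk_rank S = 2"
proof -
  obtain \<delta>' where d': "\<delta>' \<in> \<Phi>" "pr \<delta>' \<notin> span {x}" "\<gamma> \<bullet> \<delta>' < 0"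
  proof (cases "\<gamma> \<bullet> \<delta> < 0")
    case True then show ?thesis using that d by blast
  next
    case False
    then have "\<gamma> \<bullet> (- \<delta>) < 0" using gd by simp
    moreover have "pr (- \<delta>) \<notin> span {x}" using d(2) pr_neg span_neg by (metis minus_minus)
    ultimately show ?thesis using that rs_neg[OF rs d(1)] by blast
  qed
  have x0: "x \<noteq> 0" using x by (simp add: R_def)
  obtain c where c: "pr \<gamma> = c *\<^sub>R x" using g(3) by (auto simp: in_span1)
  have c0: "c \<noteq> 0" using c g(2) by auto
  have np: "\<delta>' \<notin> span {\<gamma>}"
  proof
    assume "\<delta>' \<in> span {\<gamma>}"
    then obtain k where "\<delta>' = k *\<^sub>R \<gamma>" by (auto simp: in_span1)
    then have "pr \<delta>' = (k * c) *\<^sub>R x" using c pr_scale by simp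
    then show False using d'(2) by (auto simp: in_span1)
  qed
  have s: "\<gamma> + \<delta>' \<in> \<Phi>" using root_sum[OF rs g(1) d'(1) np d'(3)] .
  define x' where "x' = pr \<gamma>"
  define y where "y = pr \<delta>'"
  define z where "z = pr (\<gamma> + \<delta>')"
  have z: "z = x' + y" unfolding z_def x'_def y_def by (rule pr_add)
  have yx: "y \<notin> span {x}" using d'(2) y_def by simp
  have zx: "z \<notin> span {x}"
  proof
    assume "z \<in> span {x}"
    then have "z - x' \<in> span {x}" using g(3) x'_def span_diff by blast
    then show False using z yx by simp
  qed
  have y0: "y \<noteq> 0" using yx span_zero by blast
  have z0: "z \<noteq> 0" using zx span_zero by blast
  have x'0: "x' \<noteq> 0" using g(2) x'_def by simp
  define S where "S = {x, -x, x', -x', y, -y, z, -z}"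
  have inR: "x' \<in> R" "y \<in> R" "z \<in> R"
    unfolding R_def x'_def y_def z_def using g(1) d'(1) s x'0 y0 z0 x'_def y_def z_def by auto
  have SR: "S \<subseteq> R" unfolding S_def using inR x R_sym by auto
  have S0: "0 \<notin> S" using x0 x'0 y0 z0 unfolding S_def by auto
  have Sroot: "ejzk_root_system S" unfolding ejzk_root_system_def S_def using S0[unfolded S_def]
    by auto
  have ind: "independent {y, x}" using yx x0
    by (intro independent_insertI) (auto simp: independent_insert dependent_single independent_empty)
  have yx_ne: "y \<noteq> x" using yx span_base[of x "{x}"] by auto
  have dxy: "dim {y, x} = 2" using dim_eq_card_independent[OF ind] yx_ne by simp
  have x'span: "x' \<in> span {y, x}" using g(3) x'_def span_mono[of "{x}" "{y, x}"] by auto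
  have Ssub: "S \<subseteq> span {y, x}"
  proof -
    have yy: "y \<in> span {y, x}" "x \<in> span {y, x}" by (auto intro: span_base)
    have zz: "z \<in> span {y, x}" using z x'span yy span_add by blast
    show ?thesis unfolding S_def using x'span yy zz span_neg by blast
  qed
  have "dim S \<le> dim {y, x}" using dim_mono[OF Ssub] .
  moreover have "dim {y, x} \<le> dim S" by (rule dim_subset) (auto simp: S_def)
  ultimately have dS: "dim (span S) = 2" using dxy by simp
  have n1: "y \<notin> span {x'}"
  proof
    assume "y \<in> span {x'}"
    then obtain k where "y = k *\<^sub>R x'" by (auto simp: in_span1)
    then have "y = (k * c) *\<^sub>R x" using c x'_def by simp
    then show False using yx by (auto simp: in_span1)
  qed
  have n2: "z \<notin> span {x'}"
  proof
    assume "z \<in> span {x'}"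
    then obtain k where "z = k *\<^sub>R x'" by (auto simp: in_span1)
    then have "z = (k * c) *\<^sub>R x" using c x'_def by simp
    then show False using zx by (auto simp: in_span1)
  qed
  have n3: "z \<notin> span {y}"
  proof
    assume "z \<in> span {y}"
    then obtain k where k: "z = k *\<^sub>R y" by (auto simp: in_span1)
    then have e: "x' = (k - 1) *\<^sub>R y" using z by (simp add: algebra_simps)
    then have "k - 1 \<noteq> 0" using x'0 by auto
    then have "y = (1 / (k - 1)) *\<^sub>R x'" using e by simp
    then have "y \<in> span {x'}" by (auto simp: in_span1)
    then show False using n1 by blast
  qed
  have irr: "ejzk_irreducible S"
    by (rule irr_plane[OF dS S0 _ _ _ n1 n2 n3]) (auto simp: S_def)
  show ?thesis using SR Sroot irr dS unfolding ejzk_rank_def by (intro exI[of _ S]) (auto simp: S_def)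
qed

lemma no_pair:
  assumes x: "x \<in> R"
    and orth: "\<forall>\<gamma>\<in>\<Phi>. \<forall>\<delta>\<in>\<Phi>. pr \<gamma> \<noteq> 0 \<and> pr \<gamma> \<in> span {x} \<and> pr \<delta> \<notin> span {x} \<longrightarrow> \<gamma> \<bullet> \<delta> = 0"
  shows "irr_component R (R \<inter> span {x}) \<and> ejzk_rank (R \<inter> span {x}) \<le> 1"
proof -
  define X where "X = {\<gamma>\<in>\<Phi>. pr \<gamma> \<noteq> 0 \<and> pr \<gamma> \<in> span {x}}"
  define M where "M = {\<delta>\<in>\<Phi>. pr \<delta> \<notin> span {x}}"
  define K where "K = {\<kappa>\<in>\<Phi>. pr \<kappa> = 0}"
  define KX where "KX = {\<kappa>\<in>K. \<exists>\<gamma>\<in>X. \<gamma> \<bullet> \<kappa> \<noteq> 0}"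
  define P where "P = X \<union> KX"
  define Q where "Q = \<Phi> - P"
  have x0: "x \<noteq> 0" using x by (simp add: R_def)
  have XQ: "\<gamma> \<bullet> q = 0" if q: "q \<in> Q" and g: "\<gamma> \<in> X" for q \<gamma>
  proof (cases "pr q \<in> span {x}")
    case False then show ?thesis using orth g q unfolding X_def Q_def by auto
  next
    case True
    then have "pr q = 0" using q unfolding Q_def P_def X_def by auto
    then have "q \<in> K" using q unfolding Q_def K_def by auto
    then show ?thesis using q g unfolding Q_def P_def KX_def by auto
  qed
  have PQ: "\<forall>p\<in>P. \<forall>q\<in>Q. p \<bullet> q = 0"
  proof (intro ballI)
    fix p q assume p: "p \<in> P" and q: "q \<in> Q"
    show "p \<bullet> q = 0"
    proof (cases "p \<in> X")
      case True then show ?thesis using XQ q by blast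
    next
      case False
      then have pK: "p \<in> KX" using p P_def by auto
      then obtain \<gamma> where g: "\<gamma> \<in> X" "\<gamma> \<bullet> p \<noteq> 0" unfolding KX_def by auto
      have pPhi: "p \<in> \<Phi>" "pr p = 0" using pK unfolding KX_def K_def by auto
      have p0: "p \<noteq> 0" using pPhi rs_0[OF rs] by auto
      have pspan: "p \<in> span K0" using pPhi qp_zero_iff by blast
      define \<gamma>' where "\<gamma>' = root_refl p \<gamma>"
      have "\<gamma>' \<in> \<Phi>" unfolding \<gamma>'_def using rs_refl[OF rs pPhi(1)] g X_def by auto
      moreover have "pr \<gamma>' = pr \<gamma>" unfolding \<gamma>'_def root_refl_def using pr_refl[OF pspan] by simp
      ultimately have g': "\<gamma>' \<in> X" using g unfolding X_def by auto
      have "\<gamma>' \<bullet> q = \<gamma> \<bullet> q - cartan \<gamma> p * (p \<bullet> q)"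
        unfolding \<gamma>'_def root_refl_def by (simp add: inner_diff_left)
      then have "cartan \<gamma> p * (p \<bullet> q) = 0" using XQ[OF q g(1)] XQ[OF q g'] by simp
      moreover have "cartan \<gamma> p \<noteq> 0" using g(2) p0 by (simp add: cartan_def)
      ultimately show ?thesis by simp
    qed
  qed
  have key: False if m: "m \<in> span Q" "pr m = x" for m
  proof -
    obtain \<gamma>0 where g0: "\<gamma>0 \<in> \<Phi>" "pr \<gamma>0 = x" using x unfolding R_def by auto
    have g0X: "\<gamma>0 \<in> P" using g0 x0 unfolding P_def X_def by (auto intro: span_base)
    have "pr (\<gamma>0 - m) = 0" using g0 m pr_diff by simp
    then have gm: "\<gamma>0 - m \<in> span K0" using qp_zero_iff by blast
    have K0K: "K0 \<subseteq> K" using K0 unfolding K_def by (auto simp: qp_zero_iff intro: span_base)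
    have KK0: "span K \<subseteq> span K0"
      by (rule span_minimal) (auto simp: K_def qp_zero_iff)
    have Ksplit: "K = (K \<inter> P) \<union> (K \<inter> Q)" unfolding Q_def K_def by auto
    have "\<gamma>0 - m \<in> span K" using gm span_mono[OF K0K] by blast
    then have "\<gamma>0 - m \<in> span ((K \<inter> P) \<union> (K \<inter> Q))" using Ksplit by simp
    then obtain a b where ab: "a \<in> span (K \<inter> P)" "b \<in> span (K \<inter> Q)" "\<gamma>0 - m = a + b"
      unfolding span_Un by blast
    have l: "\<gamma>0 - a \<in> span P" using g0X ab(1) span_mono[of "K \<inter> P" P]
      by (metis Int_lower2 span_base span_diff subsetD)
    have r: "m + b \<in> span Q" using m(1) ab(2) span_mono[of "K \<inter> Q" Q]
      by (metis Int_lower2 span_add subsetD)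
    have e: "\<gamma>0 - a = m + b" using ab(3) by (simp add: algebra_simps)
    have "(\<gamma>0 - a) \<bullet> (\<gamma>0 - a) = 0" using orth_span[OF PQ l r] e by simp
    then have "\<gamma>0 = a" by simp
    then have "\<gamma>0 \<in> span K0" using ab(1) KK0 span_mono[of "K \<inter> P" K] by blast
    then have "pr \<gamma>0 = 0" using qp_zero_iff by blast
    then show False using g0 x0 by simp
  qed
  define C0 where "C0 = R \<inter> span {x}"
  have xC0: "x \<in> C0" unfolding C0_def using x by (auto intro: span_base)
  have xin: "x \<in> span T" if T: "T \<subseteq> C0" "T \<noteq> {}" for T
  proof -
    obtain a where a: "a \<in> T" using T by blast
    then have "a \<in> R" "a \<in> span {x}" using T unfolding C0_def by auto
    then obtain k where k: "a = k *\<^sub>R x" using in_span1 by blast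
    have "a \<noteq> 0" using \<open>a \<in> R\<close> by (simp add: R_def)
    have "k \<noteq> 0" using k \<open>a \<noteq> 0\<close> by auto
    then have "x = (1 / k) *\<^sub>R a" using k by simp
    then show ?thesis using a span_base span_scale by metis
  qed
  have irr: "ejzk_irreducible C0"
    unfolding ejzk_irreducible_def
  proof
    assume "\<exists>A B. A \<noteq> {} \<and> B \<noteq> {} \<and> A \<inter> B = {} \<and> A \<union> B = C0 \<and> span A \<inter> span B = {0}"
    then obtain A B where AB: "A \<noteq> {}" "B \<noteq> {}" "A \<union> B = C0" "span A \<inter> span B = {0}" by blast
    have "x \<in> span A" "x \<in> span B" using xin AB by auto
    then show False using AB(4) x0 by blast
  qed
  have spC0: "span C0 \<subseteq> span {x}"
    by (rule span_minimal) (auto simp: C0_def)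
  have MQ: "M \<subseteq> Q" unfolding M_def Q_def P_def X_def KX_def K_def using span_zero[of "{x}"] by auto
  have RM: "R - C0 \<subseteq> pr ` Q"
  proof
    fix r assume "r \<in> R - C0"
    then obtain \<delta> where "\<delta> \<in> \<Phi>" "r = pr \<delta>" "r \<notin> span {x}" unfolding R_def C0_def by auto
    then have "\<delta> \<in> M" unfolding M_def by auto
    then show "r \<in> pr ` Q" using MQ \<open>r = pr \<delta>\<close> by auto
  qed
  have spRM: "span (R - C0) \<subseteq> pr ` span Q"
    using span_mono[OF RM] span_linear_image[OF qp_linear[of K0], of Q] by simp
  have inter: "span C0 \<inter> span (R - C0) = {0}"
  proof (intro equalityI subsetI)
    fix v assume v: "v \<in> span C0 \<inter> span (R - C0)"
    then have "v \<in> span {x}" using spC0 by blast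
    then obtain t where t: "v = t *\<^sub>R x" using in_span1 by blast
    show "v \<in> {0}"
    proof (cases "t = 0")
      case True then show ?thesis using t by simp
    next
      case False
      then have "x = (1 / t) *\<^sub>R v" using t by simp
      then have "x \<in> span (R - C0)" using v span_scale by (metis IntD2)
      then obtain m where "m \<in> span Q" "x = pr m" using spRM by auto
      then show ?thesis using key by auto
    qed
  qed (auto intro: span_zero)
  have comp: "irr_component R C0" unfolding irr_component_def
    using xC0 irr inter by (auto simp: C0_def)
  have "dim (span C0) \<le> dim {x}" using dim_mono[OF spC0] by simp
  also have "\<dots> \<le> 1" using dim_le_card[of "{x}" "{x}"] by (auto intro: span_base)
  finally show ?thesis using comp unfolding ejzk_rank_def C0_def by simp
qed

theorem part1:
  "(ejzk_root_system R \<and> ejzk_regular R) \<longleftrightarrow> (\<forall>C. irr_component R C \<longrightarrow> ejzk_rank C \<ge> 2)"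
proof
  assume "ejzk_root_system R \<and> ejzk_regular R"
  then have reg: "ejzk_regular R" by blast
  show "\<forall>C. irr_component R C \<longrightarrow> ejzk_rank C \<ge> 2"
  proof (intro allI impI)
    fix C assume C: "irr_component R C"
    then obtain \<alpha> where a: "\<alpha> \<in> C" unfolding irr_component_def by blast
    have "\<alpha> \<in> R" using a C unfolding irr_component_def by blast
    then obtain S where S: "S \<subseteq> R" "\<alpha> \<in> S" "ejzk_irreducible S" "ejzk_rank S = 2"
      using reg unfolding ejzk_regular_def by blast
    have SC: "S \<subseteq> C"
    proof (rule ccontr)
      assume nS: "\<not> S \<subseteq> C"
      have s1: "span (S \<inter> C) \<subseteq> span C" by (rule span_mono) blast
      have s2: "span (S - C) \<subseteq> span (R - C)" by (rule span_mono) (use S(1) in blast)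
      have c0: "span C \<inter> span (R - C) = {0}" using C unfolding irr_component_def by blast
      have sub0: "span (S \<inter> C) \<inter> span (S - C) \<subseteq> {0}" using s1 s2 c0 by blast
      have z: "span (S \<inter> C) \<inter> span (S - C) = {0}"
        using sub0 span_zero[of "S \<inter> C"] span_zero[of "S - C"] by blast
      have ne: "S \<inter> C \<noteq> {}" using a S(2) by blast
      have ne2: "S - C \<noteq> {}" using nS by blast
      have "\<exists>A B. A \<noteq> {} \<and> B \<noteq> {} \<and> A \<inter> B = {} \<and> A \<union> B = S \<and> span A \<inter> span B = {0}"
        apply (rule exI[of _ "S \<inter> C"], rule exI[of _ "S - C"])
        using ne ne2 z by blast
      then show False using S(3) unfolding ejzk_irreducible_def by simp
    qed
    have "dim (span S) \<le> dim (span C)" using dim_subset[OF span_mono[OF SC]] .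
    then show "ejzk_rank C \<ge> 2" using S(4) unfolding ejzk_rank_def by simp
  qed
next
  assume H: "\<forall>C. irr_component R C \<longrightarrow> ejzk_rank C \<ge> 2"
  have "ejzk_regular R" unfolding ejzk_regular_def
  proof
    fix x assume x: "x \<in> R"
    show "\<exists>S. S \<subseteq> R \<and> ejzk_root_system S \<and> x \<in> S \<and> ejzk_irreducible S \<and> ejzk_rank S = 2"
    proof (cases "\<forall>\<gamma>\<in>\<Phi>. \<forall>\<delta>\<in>\<Phi>. pr \<gamma> \<noteq> 0 \<and> pr \<gamma> \<in> span {x} \<and> pr \<delta> \<notin> span {x} \<longrightarrow> \<gamma> \<bullet> \<delta> = 0")
      case True
      from no_pair[OF x True] have c: "irr_component R (R \<inter> span {x})"
        and r: "ejzk_rank (R \<inter> span {x}) \<le> 1" by auto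
      have "ejzk_rank (R \<inter> span {x}) \<ge> 2" using H c by blast
      with r show ?thesis by simp
    next
      case False
      then obtain \<gamma> \<delta> where "\<gamma> \<in> \<Phi>" "\<delta> \<in> \<Phi>" "pr \<gamma> \<noteq> 0" "pr \<gamma> \<in> span {x}"
        "pr \<delta> \<notin> span {x}" "\<gamma> \<bullet> \<delta> \<noteq> 0" by blast
      then show ?thesis using good_pair[OF x] by blast
    qed
  qed
  then show "ejzk_root_system R \<and> ejzk_regular R" using R_ejzk by blast
qed

end



lemma int_span_sub: "int_span S \<subseteq> span S"
proof
  fix x assume "x \<in> int_span S"
  then obtain F c where F: "finite F" "F \<subseteq> S" "x = int_comb F c" unfolding int_span_def by auto
  have "int_comb F c \<in> span F" unfolding int_comb_def by (intro span_sum span_scale span_base)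
  then show "x \<in> span S" using F span_mono by blast
qed

lemma int_span_base: "d \<in> S \<Longrightarrow> d \<in> int_span S"
  unfolding int_span_def int_comb_def by (intro CollectI exI[of _ "{d}"] exI[of _ "\<lambda>_. 1"]) auto

lemma int_span_neg: "x \<in> int_span S \<Longrightarrow> - x \<in> int_span S"
proof -
  assume "x \<in> int_span S"
  then obtain F c where F: "finite F" "F \<subseteq> S" "x = int_comb F c" unfolding int_span_def by auto
  then have "- x = int_comb F (\<lambda>d. - c d)" by (simp add: int_comb_neg)
  then show ?thesis using F unfolding int_span_def by blast
qed

lemma int_comb_restrict:
  assumes "finite D" "E \<subseteq> D" "\<forall>d\<in>D - E. c d = 0"
  shows "int_comb D c = int_comb E c"
  unfolding int_comb_def by (rule sum.mono_neutral_right) (use assms in auto)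

locale setting =
  fixes \<Phi> D J :: "'a::euclidean_space set"
  assumes rs: "root_system \<Phi>" and sr: "simple_roots \<Phi> D" and JD: "J \<subseteq> D"
begin

lemma D_Phi: "D \<subseteq> \<Phi>" using sr unfolding simple_roots_def by blast
lemma D_ind: "independent D" using sr unfolding simple_roots_def by blast
lemma D_fin: "finite D" using D_ind independent_imp_finite by blast

sublocale projsys \<Phi> "D - J" using rs D_Phi by unfold_locales auto

lemma PhiJ_eq: "PhiJ \<Phi> D J = R" unfolding PhiJ_def piJ_def R_def by simp
lemma piJ_eq: "piJ D J = pr" unfolding piJ_def by simp

abbreviation "W \<equiv> span (D - J)"

lemma root_in_W:
  assumes g: "\<gamma> \<in> \<Phi>" "\<gamma> \<in> W" shows "\<gamma> \<in> int_span (D - J)"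
proof -
  obtain c where c: "\<gamma> = int_comb D c" using sr g(1) unfolding simple_roots_def by blast
  have "W = range (\<lambda>u. \<Sum>v\<in>D - J. u v *\<^sub>R v)" using span_finite[of "D - J"] D_fin by simp
  then obtain a where a: "\<gamma> = (\<Sum>v\<in>D - J. a v *\<^sub>R v)" using g(2) by auto
  define a' where "a' v = (if v \<in> J then 0 else a v)" for v
  have "(\<Sum>v\<in>D - J. a v *\<^sub>R v) = (\<Sum>v\<in>D. a' v *\<^sub>R v)"
    unfolding a'_def by (rule sum.mono_neutral_cong_left) (use D_fin in auto)
  then have "(\<Sum>v\<in>D. (of_int (c v) - a' v) *\<^sub>R v) = 0"
    using a c unfolding int_comb_def by (simp add: scaleR_diff_left sum_subtractf)
  moreover have "\<forall>c. (\<Sum>v\<in>D. c v *\<^sub>R v) = 0 \<longrightarrow> (\<forall>v\<in>D. c v = 0)"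
    using D_ind unfolding independent_explicit by blast
  ultimately have z: "\<forall>v\<in>D. of_int (c v) - a' v = 0"
    by (auto dest: spec[where x="\<lambda>v. real_of_int (c v) - a' v"])
  have "\<forall>v\<in>D - (D - J). c v = 0" using z JD unfolding a'_def by auto
  then have "\<gamma> = int_comb (D - J) c" using c int_comb_restrict[OF D_fin, of "D - J" c] by auto
  then show ?thesis unfolding int_span_def using D_fin by auto
qed

lemma int_span_roots: "int_span (D - J) \<inter> \<Phi> = \<Phi> \<inter> W"
  using root_in_W int_span_sub by blast

lemma pr0: "pr v = 0 \<longleftrightarrow> v \<in> W" using qp_zero_iff .

end



context setting begin

lemma part2:
  assumes f: "f \<in> Ffun R"
  shows "\<exists>D' J'. simple_roots \<Phi> D' \<and> J' \<subseteq> D' \<and>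
            int_span (D' - J') \<inter> \<Phi> = int_span (D - J) \<inter> \<Phi> \<and>
            pos_part R f = pr ` pos_roots \<Phi> D' - {0} \<and>
            pr ` pos_roots \<Phi> D' - {0} = piJ D' J' ` pos_roots \<Phi> D' - {0}"
proof -
  have lf: "linear f" and fnz: "\<And>y. y \<in> R \<Longrightarrow> f y \<noteq> 0" using f unfolding Ffun_def by auto
  define h0 where "h0 = (\<lambda>v. f (pr v))"
  have lh0: "linear h0" unfolding h0_def using linear_compose[OF qp_linear lf] by (simp add: o_def)
  obtain h where h: "linear h" "\<forall>u\<in>\<Phi>. h u \<noteq> (0::real)" "\<forall>u\<in>\<Phi>. h0 u > 0 \<longrightarrow> h u > 0"
    "\<forall>u\<in>\<Phi>. h0 u < 0 \<longrightarrow> h u < 0"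
    using generic_pert[OF rs_finite[OF rs] rs_0[OF rs] lh0] by blast
  interpret G: genfun \<Phi> h by (rule genfun.intro[OF rs h(1)]) (use h(2) in auto)
  have h0nz: "h0 \<gamma> \<noteq> 0" if "\<gamma> \<in> \<Phi>" "pr \<gamma> \<noteq> 0" for \<gamma>
    using fnz[of "pr \<gamma>"] that unfolding h0_def R_def by auto
  have hpos: "h0 \<gamma> > 0" if "\<gamma> \<in> \<Phi>" "pr \<gamma> \<noteq> 0" "h \<gamma> > 0" for \<gamma>
  proof (rule ccontr)
    assume "\<not> h0 \<gamma> > 0"
    then have "h0 \<gamma> < 0" using h0nz[OF that(1,2)] by linarith
    then show False using h(4) that by force
  qed
  define J' where "J' = {d\<in>G.Dh. d \<notin> W}"
  have DJ': "G.Dh - J' = {d\<in>G.Dh. d \<in> W}" unfolding J'_def by auto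
  have DhPhi: "G.Dh \<subseteq> \<Phi>" using G.Dh_Pos G.Pos_Phi by blast
  have intW: "int_span (G.Dh - J') \<inter> \<Phi> = \<Phi> \<inter> W"
  proof (intro equalityI subsetI)
    fix \<gamma> assume "\<gamma> \<in> int_span (G.Dh - J') \<inter> \<Phi>"
    then have "\<gamma> \<in> span (G.Dh - J')" "\<gamma> \<in> \<Phi>" using int_span_sub by auto
    moreover have "span (G.Dh - J') \<subseteq> W" unfolding DJ' by (rule span_minimal) auto
    ultimately show "\<gamma> \<in> \<Phi> \<inter> W" by auto
  next
    fix \<gamma> assume g: "\<gamma> \<in> \<Phi> \<inter> W"
    have main: "\<rho> \<in> int_span (G.Dh - J')" if r: "\<rho> \<in> \<Phi>" "\<rho> \<in> W" "h \<rho> > 0" for \<rho>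
    proof -
      obtain c where c: "\<rho> = int_comb G.Dh c" "\<forall>d\<in>G.Dh. c d \<ge> 0"
        using G.pos_comb r unfolding G.Pos_def by blast
      have "pr \<rho> = 0" using r(2) pr0 by blast
      then have "h0 \<rho> = 0" unfolding h0_def using linear_0[OF lf] by simp
      then have s0: "(\<Sum>d\<in>G.Dh. of_int (c d) * h0 d) = 0"
        using c(1) lin_int_comb[OF lh0, of G.Dh c] by simp
      have nn: "\<forall>d\<in>G.Dh. of_int (c d) * h0 d \<ge> 0"
      proof
        fix d assume d: "d \<in> G.Dh"
        show "of_int (c d) * h0 d \<ge> 0"
        proof (cases "pr d = 0")
          case True then show ?thesis unfolding h0_def using linear_0[OF lf] by simp
        next
          case False
          have "h d > 0" using d G.Dh_Pos unfolding G.Pos_def by auto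
          then have "h0 d > 0" using hpos[OF _ False] d DhPhi by auto
          then show ?thesis using c(2) d by simp
        qed
      qed
      have z: "\<forall>d\<in>G.Dh. of_int (c d) * h0 d = 0"
        using sum_nonneg_eq_0_iff[OF G.finDh, of "\<lambda>d. of_int (c d) * h0 d"] nn s0 by simp
      have "\<forall>d\<in>G.Dh - (G.Dh - J'). c d = 0"
      proof
        fix d assume d: "d \<in> G.Dh - (G.Dh - J')"
        then have "d \<notin> W" "d \<in> G.Dh" using DJ' by auto
        then have "pr d \<noteq> 0" using pr0 by auto
        then have "h0 d \<noteq> 0" using h0nz \<open>d \<in> G.Dh\<close> DhPhi by auto
        then show "c d = 0" using z \<open>d \<in> G.Dh\<close> by auto
      qed
      then have "\<rho> = int_comb (G.Dh - J') c" using c(1) int_comb_restrict[OF G.finDh] by auto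
      then show ?thesis unfolding int_span_def using G.finDh by auto
    qed
    show "\<gamma> \<in> int_span (G.Dh - J') \<inter> \<Phi>"
    proof (cases "h \<gamma> > 0")
      case True then show ?thesis using main g by auto
    next
      case False
      then have "h (- \<gamma>) > 0" using h(2) g linear_neg[OF h(1)] by (smt (verit) IntD1)
      moreover have "- \<gamma> \<in> \<Phi>" "- \<gamma> \<in> W" using g rs_neg[OF rs] span_neg by auto
      ultimately have "- \<gamma> \<in> int_span (G.Dh - J')" using main by blast
      then have "- (- \<gamma>) \<in> int_span (G.Dh - J')" by (rule int_span_neg)
      then show ?thesis using g by auto
    qed
  qed
  have spanW: "span (G.Dh - J') = W"
  proof
    show "span (G.Dh - J') \<subseteq> W" unfolding DJ' by (rule span_minimal) auto
  next
    have "D - J \<subseteq> int_span (G.Dh - J')" using intW D_Phi by (auto intro: span_base)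
    then have "D - J \<subseteq> span (G.Dh - J')" using int_span_sub by blast
    then show "W \<subseteq> span (G.Dh - J')" by (rule span_minimal) auto
  qed
  have pp: "pos_part R f = pr ` pos_roots \<Phi> G.Dh - {0}"
  proof (intro equalityI subsetI)
    fix y assume "y \<in> pos_part R f"
    then obtain \<gamma> where g: "\<gamma> \<in> \<Phi>" "y = pr \<gamma>" "y \<noteq> 0" "f y > 0"
      unfolding pos_part_def R_def by auto
    then have "h \<gamma> > 0" using h(3) unfolding h0_def by auto
    then have "\<gamma> \<in> pos_roots \<Phi> G.Dh" using G.pos_roots_eq g unfolding G.Pos_def by auto
    then show "y \<in> pr ` pos_roots \<Phi> G.Dh - {0}" using g by auto
  next
    fix y assume "y \<in> pr ` pos_roots \<Phi> G.Dh - {0}"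
    then obtain \<gamma> where g: "\<gamma> \<in> G.Pos" "y = pr \<gamma>" "y \<noteq> 0" using G.pos_roots_eq by auto
    then have gg: "\<gamma> \<in> \<Phi>" "h \<gamma> > 0" unfolding G.Pos_def by auto
    have "f y > 0" using hpos[OF gg(1) _ gg(2)] g unfolding h0_def by auto
    moreover have "y \<in> R" using g gg unfolding R_def by auto
    ultimately show "y \<in> pos_part R f" unfolding pos_part_def by auto
  qed
  have pj: "piJ G.Dh J' = pr" unfolding piJ_def using qp_cong[OF spanW] .
  have JDh: "J' \<subseteq> G.Dh" unfolding J'_def by auto
  show ?thesis
    apply (rule exI[of _ G.Dh], rule exI[of _ J'])
    using G.simple_Dh JDh intW int_span_roots pp pj by simp
qed

end



locale p3 = setting +
  fixes f :: "'a \<Rightarrow> real" and D' J' :: "'a set"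
  assumes f: "f \<in> Ffun R" and H1: "simple_roots \<Phi> D'" and H2: "J' \<subseteq> D'"
    and H3: "int_span (D' - J') \<inter> \<Phi> = int_span (D - J) \<inter> \<Phi>"
    and H4: "pos_part R f = pr ` pos_roots \<Phi> D' - {0}"
begin

lemma lf: "linear f" and fnz: "y \<in> R \<Longrightarrow> f y \<noteq> 0" using f unfolding Ffun_def by auto
lemma D'Phi: "D' \<subseteq> \<Phi>" using H1 unfolding simple_roots_def by blast
lemma D'ind: "independent D'" using H1 unfolding simple_roots_def by blast
lemma D'fin: "finite D'" using D'ind independent_imp_finite by blast
lemma J'fin: "finite J'" using D'fin H2 finite_subset by blast
lemma R_fin: "finite R" unfolding R_def using rs_finite[OF rs] by simp

lemma P1: "d \<in> D' - J' \<Longrightarrow> pr d = 0"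
proof -
  assume d: "d \<in> D' - J'"
  then have "d \<in> int_span (D' - J') \<inter> \<Phi>" using D'Phi int_span_base by blast
  then have "d \<in> \<Phi> \<inter> W" using H3 int_span_roots by blast
  then show "pr d = 0" using pr0 by blast
qed

lemma P2: "W \<subseteq> span (D' - J')"
proof (rule span_minimal)
  show "D - J \<subseteq> span (D' - J')"
  proof
    fix d assume "d \<in> D - J"
    then have "d \<in> int_span (D - J) \<inter> \<Phi>" using D_Phi int_span_base by blast
    then have "d \<in> int_span (D' - J')" using H3 by blast
    then show "d \<in> span (D' - J')" using int_span_sub by blast
  qed
qed auto

lemma pr_sum: "pr (\<Sum>b\<in>B. a b *\<^sub>R b) = (\<Sum>b\<in>B. a b *\<^sub>R pr b)"
  by (simp add: linear_sum[OF qp_linear] linear_scale[OF qp_linear])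

lemma P5: assumes "(\<Sum>b\<in>J'. a b *\<^sub>R pr b) = 0" shows "\<forall>b\<in>J'. a b = 0"
proof -
  define v where "v = (\<Sum>b\<in>J'. a b *\<^sub>R b)"
  have "pr v = 0" unfolding v_def pr_sum using assms .
  then have "v \<in> span (D' - J')" using pr0 P2 by blast
  moreover have "span (D' - J') = range (\<lambda>u. \<Sum>b\<in>D' - J'. u b *\<^sub>R b)"
    using span_finite[of "D' - J'"] D'fin by simp
  ultimately obtain e where e: "v = (\<Sum>b\<in>D' - J'. e b *\<^sub>R b)" by auto
  define u where "u b = (if b \<in> J' then a b else - e b)" for b
  have "(\<Sum>b\<in>D'. u b *\<^sub>R b) = (\<Sum>b\<in>J'. u b *\<^sub>R b) + (\<Sum>b\<in>D' - J'. u b *\<^sub>R b)"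
    using sum.subset_diff[OF H2 D'fin, of "\<lambda>b. u b *\<^sub>R b"] by (simp add: add.commute)
  also have "\<dots> = v - (\<Sum>b\<in>D' - J'. e b *\<^sub>R b)"
    unfolding v_def u_def by (simp add: sum_negf)
  also have "\<dots> = 0" using e by simp
  finally have s0: "(\<Sum>b\<in>D'. u b *\<^sub>R b) = 0" .
  have "\<forall>c. (\<Sum>v\<in>D'. c v *\<^sub>R v) = 0 \<longrightarrow> (\<forall>v\<in>D'. c v = 0)"
    using D'ind unfolding independent_explicit by blast
  then have u0: "\<forall>b\<in>D'. u b = 0" using s0 by blast
  show ?thesis
  proof
    fix b assume b: "b \<in> J'"
    then have "u b = 0" using u0 H2 by blast
    then show "a b = 0" using b unfolding u_def by simp
  qed
qed

lemma P3: "b \<in> J' \<Longrightarrow> pr b \<noteq> 0"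
proof
  assume b: "b \<in> J'" "pr b = 0"
  have "(\<Sum>x\<in>J'. (if x = b then 1 else 0) *\<^sub>R pr x) = (\<Sum>x\<in>J'. if x = b then pr x else 0)"
    by (rule sum.cong) auto
  also have "\<dots> = pr b" using J'fin b(1) by (simp add: sum.delta)
  finally have "(\<Sum>x\<in>J'. (if x = b then 1 else 0) *\<^sub>R pr x) = pr b" .
  then have "(\<Sum>x\<in>J'. (if x = b then 1 else (0::real)) *\<^sub>R pr x) = 0" using b by simp
  from P5[OF this] b(1) show False by auto
qed

lemma P4: "b \<in> J' \<Longrightarrow> pr b \<in> pos_part R f"
proof -
  assume b: "b \<in> J'"
  then have bD: "b \<in> D'" "b \<in> \<Phi>" using H2 D'Phi by auto
  have "b = int_comb D' (\<lambda>d. if d = b then 1 else 0)" using int_comb_delta[OF D'fin bD(1)] by simp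
  then have "b \<in> pos_roots \<Phi> D'" unfolding pos_roots_def using bD
    by (intro CollectI conjI exI[of _ "\<lambda>d. if d = b then 1 else 0"]) auto
  then show ?thesis using H4 P3[OF b] by auto
qed

lemma P6:
  assumes "y \<in> pos_part R f"
  shows "\<exists>c. y = (\<Sum>b\<in>J'. of_int (c b) *\<^sub>R pr b) \<and> (\<forall>b\<in>J'. c b \<ge> 0)"
proof -
  obtain \<gamma> where g: "\<gamma> \<in> pos_roots \<Phi> D'" "y = pr \<gamma>" using assms H4 by auto
  then obtain c where c: "\<gamma> = int_comb D' c" "\<forall>d\<in>D'. c d \<ge> 0" unfolding pos_roots_def by auto
  have "y = (\<Sum>b\<in>D'. of_int (c b) *\<^sub>R pr b)" using g c by (simp add: int_comb_def pr_sum)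
  also have "\<dots> = (\<Sum>b\<in>J'. of_int (c b) *\<^sub>R pr b)"
    by (rule sum.mono_neutral_right[OF D'fin H2]) (use P1 in auto)
  finally show ?thesis using c H2 by auto
qed

end



context p3 begin

lemma sub1: "pos_part R f - core R f \<subseteq> R \<inter> (\<Union>\<alpha>\<in>pr ` J'. nat_mults \<alpha>)"
proof
  fix x assume x: "x \<in> pos_part R f - core R f"
  then have xp: "x \<in> pos_part R f" and xR: "x \<in> R" and fx: "f x > 0" unfolding pos_part_def by auto
  have x0: "x \<noteq> 0" using xR unfolding R_def by auto
  obtain g where g: "g \<in> Ffun R" and sp: "span {x} = span (pos_part R f \<inter> pos_part R g)"
    using x xp unfolding core_def by blast
  have lg: "linear g" using g unfolding Ffun_def by blast
  have "pos_part R f \<inter> pos_part R g \<noteq> {}"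
  proof
    assume "pos_part R f \<inter> pos_part R g = {}"
    then have "x \<in> span {}" using sp span_base[of x "{x}"] by auto
    then show False using x0 by simp
  qed
  then obtain z where z: "z \<in> pos_part R f" "z \<in> pos_part R g" by blast
  have "z \<in> span {x}" using sp z span_base[of z "pos_part R f \<inter> pos_part R g"] by auto
  then obtain t where t: "z = t *\<^sub>R x" using in_span1 by blast
  have "f z = t * f x" using t linear_scale[OF lf] by simp
  moreover have "f z > 0" using z unfolding pos_part_def by auto
  ultimately have t0: "t > 0" using fx by (simp add: zero_less_mult_iff)
  have "g z = t * g x" using t linear_scale[OF lg] by simp
  moreover have "g z > 0" using z unfolding pos_part_def by auto
  ultimately have gx: "g x > 0" using t0 by (simp add: zero_less_mult_iff)
  obtain c where c: "x = (\<Sum>b\<in>J'. of_int (c b) *\<^sub>R pr b)" "\<forall>b\<in>J'. c b \<ge> 0" using P6[OF xp] by blast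
  have "g x = (\<Sum>b\<in>J'. of_int (c b) * g (pr b))" using c(1)
    by (simp add: linear_sum[OF lg] linear_scale[OF lg])
  then have "\<exists>b\<in>J'. of_int (c b) * g (pr b) > 0"
    using gx by (metis (no_types, lifting) not_le sum_nonpos)
  then obtain \<beta> where b: "\<beta> \<in> J'" "of_int (c \<beta>) * g (pr \<beta>) > 0" by blast
  have c0: "c \<beta> \<ge> 0" using c(2) b(1) by blast
  have "(0 < real_of_int (c \<beta>) \<and> 0 < g (pr \<beta>)) \<or> (real_of_int (c \<beta>) < 0 \<and> g (pr \<beta>) < 0)"
    using b(2) zero_less_mult_iff by blast
  then have cb: "c \<beta> > 0" "g (pr \<beta>) > 0" using c0 by auto
  have "pr \<beta> \<in> pos_part R f" using P4[OF b(1)] .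
  then have "pr \<beta> \<in> pos_part R f \<inter> pos_part R g" using cb unfolding pos_part_def by auto
  then have "pr \<beta> \<in> span {x}" using sp span_base[of "pr \<beta>" "pos_part R f \<inter> pos_part R g"] by simp
  then obtain s where s: "pr \<beta> = s *\<^sub>R x" using in_span1 by blast
  have s0: "s \<noteq> 0" using P3[OF b(1)] s by auto
  have xs: "x = (1 / s) *\<^sub>R pr \<beta>" using s s0 by simp
  have "(\<Sum>b\<in>J'. (of_int (c b) - (if b = \<beta> then 1 / s else 0)) *\<^sub>R pr b)
      = x - (\<Sum>b\<in>J'. (if b = \<beta> then 1 / s else 0) *\<^sub>R pr b)"
    using c(1) by (simp add: scaleR_diff_left sum_subtractf)
  also have "(\<Sum>b\<in>J'. (if b = \<beta> then 1 / s else 0) *\<^sub>R pr b) = (\<Sum>b\<in>J'. if b = \<beta> then (1 / s) *\<^sub>R pr b else 0)"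
    by (rule sum.cong) auto
  also have "\<dots> = (1 / s) *\<^sub>R pr \<beta>" using J'fin b(1) by (simp add: sum.delta)
  finally have "(\<Sum>b\<in>J'. (of_int (c b) - (if b = \<beta> then 1 / s else 0)) *\<^sub>R pr b) = 0"
    using xs by simp
  from P5[OF this] b(1) have "of_int (c \<beta>) = 1 / s" by auto
  then have xc: "x = of_int (c \<beta>) *\<^sub>R pr \<beta>" using xs by simp
  have "x = of_nat (nat (c \<beta>)) *\<^sub>R pr \<beta>" using xc cb by simp
  moreover have "nat (c \<beta>) \<ge> 1" using cb by simp
  ultimately have "x \<in> nat_mults (pr \<beta>)" unfolding nat_mults_def by blast
  then show "x \<in> R \<inter> (\<Union>\<alpha>\<in>pr ` J'. nat_mults \<alpha>)" using xR b(1) by blast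
qed

end



context p3 begin

lemma sub2: "R \<inter> (\<Union>\<alpha>\<in>pr ` J'. nat_mults \<alpha>) \<subseteq> pos_part R f - core R f"
proof
  fix x assume "x \<in> R \<inter> (\<Union>\<alpha>\<in>pr ` J'. nat_mults \<alpha>)"
  then obtain \<alpha> k where xR: "x \<in> R" and a: "\<alpha> \<in> J'" and k: "k \<ge> 1" "x = of_nat k *\<^sub>R pr \<alpha>"
    unfolding nat_mults_def by blast
  have fa: "f (pr \<alpha>) > 0" using P4[OF a] unfolding pos_part_def by auto
  have "f x = of_nat k * f (pr \<alpha>)" using k linear_scale[OF lf] by simp
  then have fx: "f x > 0" using fa k by simp
  then have xp: "x \<in> pos_part R f" using xR unfolding pos_part_def by auto
  define pf where "pf = pos_part R f"
  have pffin: "finite pf" unfolding pf_def pos_part_def using R_fin by simp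
  obtain ll :: "'a \<Rightarrow> real" where l: "linear ll" "\<forall>d\<in>D'. ll d = (if d \<in> J' \<and> d \<noteq> \<alpha> then 1 else 0)"
  proof -
    have "\<exists>g::'a\<Rightarrow>real. linear g \<and> (\<forall>x\<in>D'. g x = (\<lambda>d. if d \<in> J' \<and> d \<noteq> \<alpha> then 1 else 0) x)"
      by (rule linear_independent_extend[OF D'ind])
    then show ?thesis using that by auto
  qed
  have lW: "ll w = 0" if "w \<in> W" for w
  proof -
    have "w \<in> span (D' - J')" using that P2 by blast
    moreover have "\<forall>d\<in>D' - J'. ll d = 0" using l(2) by auto
    ultimately show ?thesis using linear_eq_0_on_span[OF l(1)] by blast
  qed
  have lpr: "ll (pr v) = ll v" for v
  proof -
    have "v - pr v \<in> W" using qp_char[of v "D - J"] by blast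
    then have "ll (v - pr v) = 0" using lW by blast
    then show ?thesis using linear_diff[OF l(1)] by simp
  qed
  have lsum: "ll y = of_int (\<Sum>b\<in>J'. c b * (if b \<noteq> \<alpha> then 1 else 0))"
    if "y = (\<Sum>b\<in>J'. of_int (c b) *\<^sub>R pr b)" for y c
  proof -
    have "ll y = (\<Sum>b\<in>J'. of_int (c b) * ll (pr b))" using that
      by (simp add: linear_sum[OF l(1)] linear_scale[OF l(1)])
    also have "\<dots> = (\<Sum>b\<in>J'. of_int (c b) * (if b \<noteq> \<alpha> then 1 else 0))"
      by (rule sum.cong) (use l(2) H2 lpr in auto)
    also have "\<dots> = of_int (\<Sum>b\<in>J'. c b * (if b \<noteq> \<alpha> then 1 else 0))"
      by (simp add: of_int_sum if_distrib cong: if_cong)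
    finally show ?thesis .
  qed
  define M where "M = (\<Sum>y\<in>pf. \<bar>f y\<bar>) + 1"
  have fM: "f y < M" if "y \<in> pf" for y
  proof -
    have "\<bar>f y\<bar> \<le> (\<Sum>y\<in>pf. \<bar>f y\<bar>)" using member_le_sum[OF that _ pffin, of "\<lambda>y. \<bar>f y\<bar>"] by simp
    then show ?thesis unfolding M_def by linarith
  qed
  define g0 where "g0 = (\<lambda>v. f v + (- M) * ll v)"
  have lg0: "linear g0" unfolding g0_def using lf l(1) by (rule lin_comb)
  have g0cases: "(ll y = 0 \<and> g0 y > 0) \<or> (ll y \<noteq> 0 \<and> g0 y < 0)" if y: "y \<in> pf" for y
  proof -
    obtain c where c: "y = (\<Sum>b\<in>J'. of_int (c b) *\<^sub>R pr b)" "\<forall>b\<in>J'. c b \<ge> 0"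
      using P6 y unfolding pf_def by blast
    define sI where "sI = (\<Sum>b\<in>J'. c b * (if b \<noteq> \<alpha> then 1 else 0))"
    have ly: "ll y = of_int sI" using lsum[OF c(1)] unfolding sI_def .
    have nn: "sI \<ge> 0" unfolding sI_def using c(2) by (intro sum_nonneg) auto
    have fy: "f y > 0" using y unfolding pf_def pos_part_def by auto
    show ?thesis
    proof (cases "ll y = 0")
      case True then show ?thesis using fy unfolding g0_def by simp
    next
      case False
      then have "sI \<noteq> 0" using ly by auto
      then have "sI \<ge> 1" using nn by simp
      then have "ll y \<ge> 1" using ly by simp
      moreover have "M > 0" unfolding M_def by (simp add: sum_nonneg add_nonneg_pos)
      ultimately have "M * ll y \<ge> M" by simp
      then have "g0 y < 0" using fM[OF y] unfolding g0_def by simp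
      then show ?thesis using False by simp
    qed
  qed
  define U where "U = R \<union> {y - z | y z. y \<in> R \<and> z \<in> R \<and> y \<noteq> z}"
  have Ufin: "finite U"
  proof -
    have "{y - z | y z. y \<in> R \<and> z \<in> R \<and> y \<noteq> z} \<subseteq> (\<lambda>p. fst p - snd p) ` (R \<times> R)"
      by force
    moreover have "finite ((\<lambda>p. fst p - snd p) ` (R \<times> R))" using R_fin by simp
    ultimately show ?thesis unfolding U_def using R_fin finite_subset by blast
  qed
  have R0: "0 \<notin> R" by (simp add: R_def)
  have U0: "0 \<notin> U" unfolding U_def using R0 by auto
  obtain g where g: "linear g" "\<forall>u\<in>U. g u \<noteq> (0::real)" "\<forall>u\<in>U. g0 u > 0 \<longrightarrow> g u > 0"
    "\<forall>u\<in>U. g0 u < 0 \<longrightarrow> g u < 0"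
    using generic_pert[OF Ufin U0 lg0] by blast
  have gF: "g \<in> Ffun R"
    unfolding Ffun_def
  proof (intro CollectI conjI g(1) ballI inj_onI)
    fix y assume "y \<in> R" then show "g y \<noteq> 0" using g(2) unfolding U_def by auto
  next
    fix y z assume yz: "y \<in> R" "z \<in> R" "g y = g z"
    show "y = z"
    proof (rule ccontr)
      assume "y \<noteq> z"
      then have "y - z \<in> U" unfolding U_def using yz by auto
      then have "g (y - z) \<noteq> 0" using g(2) by blast
      then show False using yz(3) linear_diff[OF g(1)] by simp
    qed
  qed
  define T where "T = {y\<in>pf. ll y = 0}"
  have pfg: "pos_part R f \<inter> pos_part R g = T"
  proof (intro equalityI subsetI)
    fix y assume y: "y \<in> pos_part R f \<inter> pos_part R g"
    then have ypf: "y \<in> pf" "y \<in> U" "g y > 0" unfolding pf_def U_def pos_part_def by auto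
    show "y \<in> T" using g0cases[OF ypf(1)] g(4) ypf unfolding T_def by force
  next
    fix y assume y: "y \<in> T"
    then have ypf: "y \<in> pf" "y \<in> U" "ll y = 0" unfolding T_def pf_def U_def pos_part_def by auto
    then have "g0 y > 0" using g0cases[OF ypf(1)] by auto
    then have "g y > 0" using g(3) ypf by auto
    then show "y \<in> pos_part R f \<inter> pos_part R g" using ypf unfolding pf_def pos_part_def by auto
  qed
  have k0: "real k \<noteq> 0" using k by simp
  have pra: "pr \<alpha> = (1 / real k) *\<^sub>R x" using k k0 by simp
  have xT: "x \<in> T"
  proof -
    have "ll x = real k * ll (pr \<alpha>)" using k linear_scale[OF l(1)] by simp
    also have "ll (pr \<alpha>) = 0" using lpr l(2) a H2 by auto
    finally show ?thesis using xp unfolding T_def pf_def by simp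
  qed
  have Tsub: "T \<subseteq> span {x}"
  proof
    fix y assume y: "y \<in> T"
    then have ypf: "y \<in> pf" "ll y = 0" unfolding T_def by auto
    obtain c where c: "y = (\<Sum>b\<in>J'. of_int (c b) *\<^sub>R pr b)" "\<forall>b\<in>J'. c b \<ge> 0"
      using P6 ypf(1) unfolding pf_def by blast
    define sI where "sI = (\<Sum>b\<in>J'. c b * (if b \<noteq> \<alpha> then 1 else 0))"
    have "ll y = of_int sI" using lsum[OF c(1)] unfolding sI_def .
    then have "sI = 0" using ypf(2) by simp
    then have s0: "(\<Sum>b\<in>J'. c b * (if b \<noteq> \<alpha> then 1 else 0)) = 0" unfolding sI_def .
    have "\<forall>b\<in>J'. c b * (if b \<noteq> \<alpha> then 1 else 0) = 0"
      using sum_nonneg_eq_0_iff[OF J'fin, of "\<lambda>b. c b * (if b \<noteq> \<alpha> then 1 else 0)"] s0 c(2) by simp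
    then have cz: "\<forall>b\<in>J'. b \<noteq> \<alpha> \<longrightarrow> c b = 0" by auto
    have "y = (\<Sum>b\<in>J'. if b = \<alpha> then of_int (c b) *\<^sub>R pr b else 0)"
      unfolding c(1) by (rule sum.cong) (use cz in auto)
    also have "\<dots> = of_int (c \<alpha>) *\<^sub>R pr \<alpha>" using J'fin a by (simp add: sum.delta)
    also have "\<dots> = (of_int (c \<alpha>) / real k) *\<^sub>R x" using pra by simp
    finally show "y \<in> span {x}" using in_span1 by blast
  qed
  have "span {x} = span T"
  proof
    show "span {x} \<subseteq> span T" using xT by (intro span_mono) auto
    show "span T \<subseteq> span {x}" using Tsub by (intro span_minimal) auto
  qed
  then have "span {x} = span (pos_part R f \<inter> pos_part R g)" using pfg by simp
  then have "x \<notin> core R f" using gF unfolding core_def by blast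
  then show "x \<in> pos_part R f - core R f" using xp by blast
qed

end



theorem lemma4p2:
  fixes \<Phi> D J :: "'a::euclidean_space set"
  assumes "root_system \<Phi>" and "simple_roots \<Phi> D" and "J \<subseteq> D"
  shows "(ejzk_root_system (PhiJ \<Phi> D J) \<and> ejzk_regular (PhiJ \<Phi> D J) \<longleftrightarrow>
           (\<forall>C. irr_component (PhiJ \<Phi> D J) C \<longrightarrow> ejzk_rank C \<ge> 2))
       \<and> (\<forall>f\<in>Ffun (PhiJ \<Phi> D J). \<exists>D' J'. simple_roots \<Phi> D' \<and> J' \<subseteq> D' \<and>
            int_span (D' - J') \<inter> \<Phi> = int_span (D - J) \<inter> \<Phi> \<and>
            pos_part (PhiJ \<Phi> D J) f = piJ D J ` pos_roots \<Phi> D' - {0} \<and>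
            piJ D J ` pos_roots \<Phi> D' - {0} = piJ D' J' ` pos_roots \<Phi> D' - {0})
       \<and> (\<forall>f\<in>Ffun (PhiJ \<Phi> D J). \<forall>D' J'. simple_roots \<Phi> D' \<and> J' \<subseteq> D' \<and>
            int_span (D' - J') \<inter> \<Phi> = int_span (D - J) \<inter> \<Phi> \<and>
            pos_part (PhiJ \<Phi> D J) f = piJ D J ` pos_roots \<Phi> D' - {0} \<and>
            piJ D J ` pos_roots \<Phi> D' - {0} = piJ D' J' ` pos_roots \<Phi> D' - {0} \<longrightarrow>
            pos_part (PhiJ \<Phi> D J) f - core (PhiJ \<Phi> D J) f =
              PhiJ \<Phi> D J \<inter> (\<Union>\<alpha>\<in>piJ D J ` J'. nat_mults \<alpha>))"
proof -
  interpret S: setting \<Phi> D J by (rule setting.intro[OF assms])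
  have e1: "PhiJ \<Phi> D J = S.R" by (rule S.PhiJ_eq)
  have e2: "piJ D J = S.pr" by (rule S.piJ_eq)
  have i: "(ejzk_root_system S.R \<and> ejzk_regular S.R) \<longleftrightarrow> (\<forall>C. irr_component S.R C \<longrightarrow> ejzk_rank C \<ge> 2)"
    by (rule S.part1)
  have ii: "\<forall>f\<in>Ffun S.R. \<exists>D' J'. simple_roots \<Phi> D' \<and> J' \<subseteq> D' \<and>
            int_span (D' - J') \<inter> \<Phi> = int_span (D - J) \<inter> \<Phi> \<and>
            pos_part S.R f = S.pr ` pos_roots \<Phi> D' - {0} \<and>
            S.pr ` pos_roots \<Phi> D' - {0} = piJ D' J' ` pos_roots \<Phi> D' - {0}"
    using S.part2 by blast
  have iii: "pos_part S.R f - core S.R f = S.R \<inter> (\<Union>\<alpha>\<in>S.pr ` J'. nat_mults \<alpha>)"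
    if "f \<in> Ffun S.R" "simple_roots \<Phi> D'" "J' \<subseteq> D'"
      "int_span (D' - J') \<inter> \<Phi> = int_span (D - J) \<inter> \<Phi>"
      "pos_part S.R f = S.pr ` pos_roots \<Phi> D' - {0}" for f D' J'
  proof -
    interpret P: p3 \<Phi> D J f D' J' by (rule p3.intro[OF setting.intro[OF assms]]) (rule p3_axioms.intro; fact)
    show ?thesis using P.sub1 P.sub2 by blast
  qed
  show ?thesis unfolding e1 e2
  proof (intro conjI)
    show "(ejzk_root_system S.R \<and> ejzk_regular S.R) = (\<forall>C. irr_component S.R C \<longrightarrow> 2 \<le> ejzk_rank C)"
      by (rule i)
    show "\<forall>f\<in>Ffun S.R. \<exists>D' J'. simple_roots \<Phi> D' \<and> J' \<subseteq> D' \<and>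
            int_span (D' - J') \<inter> \<Phi> = int_span (D - J) \<inter> \<Phi> \<and>
            pos_part S.R f = S.pr ` pos_roots \<Phi> D' - {0} \<and>
            S.pr ` pos_roots \<Phi> D' - {0} = piJ D' J' ` pos_roots \<Phi> D' - {0}"
      by (rule ii)
  next
    show "\<forall>f\<in>Ffun S.R. \<forall>D' J'. simple_roots \<Phi> D' \<and> J' \<subseteq> D' \<and>
            int_span (D' - J') \<inter> \<Phi> = int_span (D - J) \<inter> \<Phi> \<and>
            pos_part S.R f = S.pr ` pos_roots \<Phi> D' - {0} \<and>
            S.pr ` pos_roots \<Phi> D' - {0} = piJ D' J' ` pos_roots \<Phi> D' - {0} \<longrightarrow>
            pos_part S.R f - core S.R f = S.R \<inter> (\<Union>\<alpha>\<in>S.pr ` J'. nat_mults \<alpha>)"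
    proof (intro ballI allI impI)
      fix f D' J' assume f: "f \<in> Ffun S.R" and
        c: "simple_roots \<Phi> D' \<and> J' \<subseteq> D' \<and>
            int_span (D' - J') \<inter> \<Phi> = int_span (D - J) \<inter> \<Phi> \<and>
            pos_part S.R f = S.pr ` pos_roots \<Phi> D' - {0} \<and>
            S.pr ` pos_roots \<Phi> D' - {0} = piJ D' J' ` pos_roots \<Phi> D' - {0}"
      from c have c1: "simple_roots \<Phi> D'" and c2: "J' \<subseteq> D'"
        and c3: "int_span (D' - J') \<inter> \<Phi> = int_span (D - J) \<inter> \<Phi>"
        and c4: "pos_part S.R f = S.pr ` pos_roots \<Phi> D' - {0}" by blast+
      show "pos_part S.R f - core S.R f = S.R \<inter> (\<Union>\<alpha>\<in>S.pr ` J'. nat_mults \<alpha>)"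
        by (rule iii[OF f c1 c2 c3 c4])
    qed
  qed
qed



end
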